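(* Assume the standing assumptions of the context, that the eigenvalues $a_k^f$ are strictly increasing in $k$, and that $a_2^f\le2a_1^f$. Let $T^*=-\frac1{2a_2^f}\ln\big(1-\frac{a_2^f}{2a_1^f}\big)$. If $T>T^*$, then any minimizer $(y^*,\tau)$ of $I$ over $\mathcal T$ satisfies $\|y^*(t)\|_{\mathcal H}<L$ for all $t<T$ and $\|y^*(T)\|_{\mathcal H}=L$; moreover $\tau=T$ is the first exit time of $y^*$ from $\mathring B_{\mathcal H}(0,L)$ and the exit is in the direction of $e_2^f$, i.e. $\langle y^*(T),e_k^f\rangle_{\mathcal H}=0$ for all $k\ne2$.
   Context: $\ell>0$, $\mathcal H=L^2(0,\ell)$; $A$ is the realization in $\mathcal H$ of a uniformly elliptic operator $\mathcal A\phi=(a\phi')'$ ($a\in C^1$, $\inf a>0$) with Dirichlet, Neumann/Robin or periodic boundary conditions, $-A$ self-adjoint with nonnegative spectrum; $f\in C^2(\mathbb R)$ with polynomial growth, $F(x)(\xi)=f(x(\xi))$, $DF(x)$ = multiplication by $f'(x(\cdot))$; $x^*$ is a stable equilibrium ($Ax^*+F(x^* )=0$) and $-A-DF(x^* )$ is self-adjoint with nonnegative eigenvalues $a^f_1\le a_2^f\le\dots$ and complete orthonormal eigenvectors $e_k^f$. $L>0$. Let $u(t,\eta)=2a_1^f\langle\eta,e_1^f\rangle_{\mathcal H}e_1^f$. $\mathcal T$ is the set of pairs $(y,\tau)$ with $y\in C([0,T];\mathcal H)$, $y(0)=0$, $\tau\in(0,T]$, $\|y(\tau)\|_{\mathcal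 H}=L$ and $\|y(t)\|_{\mathcal H}\le L$ for $t\in[0,\tau)$. $\mathcal C_{y}=\{v\in L^2([0,T];\mathcal H):\dot y=Ay+DF(x^* )y-u(t,y)+v\text{ on }[0,T]\}$ and $I(y,\tau)=\inf_{v\in\mathcal C_y}\int_0^\tau\big(\frac12\|v(t)\|^2_{\mathcal H}-\|u(t,y(t))\|^2_{\mathcal H}\big)dt$. *)

theory Defs
  imports "HOL-Analysis.Analysis" "HOL-Probability.Probability"
begin

text \<open>H is a separable real Hilbert space 'h;
  e k (k \<ge> 1) is the complete orthonormal system of eigenvectors of
  -A-DF(x*) with eigenvalues a k (k \<ge> 1).  Index 0 is unused.\<close>

text \<open>Feedback u(t,eta) = 2 a_1 <eta,e_1> e_1 (independent of t).\<close>
definition ctrl :: "(nat \<Rightarrow> 'h::real_inner) \<Rightarrow> (nat \<Rightarrow> real) \<Rightarrow> 'h \<Rightarrow> 'h" where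
  "ctrl e a \<eta> = (2 * a 1 * inner \<eta> (e 1)) *\<^sub>R e 1"

definition L2_on :: "real \<Rightarrow> (real \<Rightarrow> 'h::real_normed_vector) \<Rightarrow> bool" where
  "L2_on T v \<longleftrightarrow> set_borel_measurable lborel {0..T} v \<and>
      set_integrable lborel {0..T} (\<lambda>t. (norm (v t))\<^sup>2)"

text \<open>Weak formulation of  y' = Ay + DF(x*)y - u(t,y) + v  on [0,T], tested
  against the eigenvectors e k of the self-adjoint operator -A-DF(x*):
  <A y + DF(x*) y, e_k> = -a_k <y, e_k>.\<close>
definition weak_sol :: "(nat \<Rightarrow> 'h::real_inner) \<Rightarrow> (nat \<Rightarrow> real) \<Rightarrow> real
    \<Rightarrow> (real \<Rightarrow> 'h) \<Rightarrow> (real \<Rightarrow> 'h) \<Rightarrow> bool" where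
  "weak_sol e a T y v \<longleftrightarrow>
     (\<forall>k\<ge>1. \<forall>t\<in>{0..T}.
        inner (y t) (e k) - inner (y 0) (e k) =
        (LINT s:{0..t}|lborel. - a k * inner (y s) (e k)
                                - inner (ctrl e a (y s)) (e k) + inner (v s) (e k)))"

definition Cset :: "(nat \<Rightarrow> 'h::real_inner) \<Rightarrow> (nat \<Rightarrow> real) \<Rightarrow> real
    \<Rightarrow> (real \<Rightarrow> 'h) \<Rightarrow> (real \<Rightarrow> 'h) set" where
  "Cset e a T y = {v. L2_on T v \<and> weak_sol e a T y v}"

definition Tset :: "real \<Rightarrow> real \<Rightarrow> ((real \<Rightarrow> 'h::real_normed_vector) \<times> real) set" where
  "Tset T L = {(y, \<tau>). continuous_on {0..T} y \<and> y 0 = 0 \<and> 0 < \<tau> \<and> \<tau> \<le> T \<and>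
                 norm (y \<tau>) = L \<and> (\<forall>t\<in>{0..<\<tau>}. norm (y t) \<le> L)}"

text \<open>The functional I (infimum over the empty set is +infinity).\<close>
definition Ifun :: "(nat \<Rightarrow> 'h::real_inner) \<Rightarrow> (nat \<Rightarrow> real) \<Rightarrow> real
    \<Rightarrow> (real \<Rightarrow> 'h) \<Rightarrow> real \<Rightarrow> ereal" where
  "Ifun e a T y \<tau> = (INF v \<in> Cset e a T y.
      ereal (LINT t:{0..\<tau>}|lborel. (1/2) * (norm (v t))\<^sup>2 - (norm (ctrl e a (y t)))\<^sup>2))"

definition Tstar :: "real \<Rightarrow> real \<Rightarrow> ereal" where
  "Tstar a1 a2 = (if a2 < 2 * a1 then ereal (- (1 / (2 * a2)) * ln (1 - a2 / (2 * a1))) else \<infinity>)"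

end

theory Submission
  imports Defs
begin


lemma int_bdd_mult:
  fixes f g :: "'a \<Rightarrow> real"
  assumes "integrable M f" "g \<in> borel_measurable M" "\<And>x. \<bar>g x\<bar> \<le> B"
  shows "integrable M (\<lambda>x. g x * f x)"
proof (rule Bochner_Integration.integrable_bound[of _ "\<lambda>x. B * f x"])
  show "integrable M (\<lambda>x. B * f x)" using assms(1) by simp
  show "(\<lambda>x. g x * f x) \<in> borel_measurable M"
    using assms(1,2) by (simp add: borel_measurable_integrable borel_measurable_times)
  show "AE x in M. norm (g x * f x) \<le> norm (B * f x)"
  proof (rule AE_I2)
    fix x have "0 \<le> B" using assms(3)[of x] by linarith
    then show "norm (g x * f x) \<le> norm (B * f x)"
      using assms(3)[of x] by (simp add: abs_mult mult_right_mono)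
  qed
qed


lemma ibp:
  fixes g h :: "real \<Rightarrow> real" and \<sigma> :: real
  assumes g: "set_integrable lborel {0..\<sigma>} g" and h: "set_integrable lborel {0..\<sigma>} h"
  shows "(LINT t:{0..\<sigma>}|lborel. h t * (LINT s:{0..t}|lborel. g s))
       + (LINT t:{0..\<sigma>}|lborel. (LINT s:{0..t}|lborel. h s) * g t)
       = (LINT s:{0..\<sigma>}|lborel. h s) * (LINT s:{0..\<sigma>}|lborel. g s)"
proof -
  define g' where "g' = (\<lambda>s. indicator {0..\<sigma>} s * g s)"
  define h' where "h' = (\<lambda>s. indicator {0..\<sigma>} s * h s)"
  have gi: "integrable lborel g'" using g by (simp add: set_integrable_def g'_def)
  have hi: "integrable lborel h'" using h by (simp add: set_integrable_def h'_def)
  have gm[measurable]: "g' \<in> borel_measurable lborel" using gi by auto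
  have hm[measurable]: "h' \<in> borel_measurable lborel" using hi by auto
  define F where "F = (\<lambda>t s. if s \<le> t then g' s * h' t else 0)"
  have Feq: "F t s = h' t * (indicator {..t} s * g' s)" for t s
    by (simp add: F_def indicator_def)
  have Feq2: "F t s = g' s * (indicator {s..} t * h' t)" for t s
    by (simp add: F_def indicator_def)
  have Fm[measurable]: "case_prod F \<in> borel_measurable (lborel \<Otimes>\<^sub>M lborel)"
    unfolding F_def by measurable
  have gsi: "integrable lborel (\<lambda>s. indicator A s * g' s)" if "A \<in> sets lborel" for A
    using integrable_mult_indicator[OF that gi] by simp
  have hsi: "integrable lborel (\<lambda>s. indicator A s * h' s)" if "A \<in> sets lborel" for A
    using integrable_mult_indicator[OF that hi] by simp
  define Ga where "Ga = (LINT s|lborel. \<bar>g' s\<bar>)"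
  have FI: "integrable (lborel \<Otimes>\<^sub>M lborel) (case_prod F)"
  proof (rule lborel_pair.Fubini_integrable)
    show "case_prod F \<in> borel_measurable (lborel \<Otimes>\<^sub>M lborel)" by (rule Fm)
    show "AE t in lborel. integrable lborel (\<lambda>s. case_prod F (t, s))"
      by (rule AE_I2) (simp add: Feq gsi)
    show "integrable lborel (\<lambda>t. LINT s|lborel. norm (case_prod F (t, s)))"
    proof (rule Bochner_Integration.integrable_bound[of _ "\<lambda>t. Ga * h' t"])
      show "integrable lborel (\<lambda>t. Ga * h' t)" using hi by simp
      show "(\<lambda>t. LINT s|lborel. norm (case_prod F (t, s))) \<in> borel_measurable lborel"
        by measurable
      show "AE t in lborel. norm (LINT s|lborel. norm (case_prod F (t, s))) \<le> norm (Ga * h' t)"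
      proof (rule AE_I2)
        fix t
        have e: "(LINT s|lborel. norm (case_prod F (t, s))) = \<bar>h' t\<bar> * (LINT s|lborel. indicator {..t} s * \<bar>g' s\<bar>)"
          by (simp add: Feq abs_mult)
        have i1: "integrable lborel (\<lambda>s. indicator {..t} s * \<bar>g' s\<bar>)"
          using integrable_mult_indicator[of "{..t}" lborel "\<lambda>s. \<bar>g' s\<bar>"] gi by simp
        have le: "(LINT s|lborel. indicator {..t} s * \<bar>g' s\<bar>) \<le> Ga"
          unfolding Ga_def by (rule integral_mono[OF i1]) (use gi in \<open>auto simp: indicator_def\<close>)
        have ge: "0 \<le> (LINT s|lborel. indicator {..t} s * \<bar>g' s\<bar>)"
          by (rule integral_nonneg_AE) auto
        show "norm (LINT s|lborel. norm (case_prod F (t, s))) \<le> norm (Ga * h' t)"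
        proof -
          have "\<bar>h' t\<bar> * (LINT s|lborel. indicator {..t} s * \<bar>g' s\<bar>) \<le> \<bar>h' t\<bar> * Ga"
            using le by (rule mult_left_mono) simp
          moreover have "0 \<le> Ga" unfolding Ga_def by (rule integral_nonneg_AE) auto
          ultimately show ?thesis unfolding e using ge by (simp add: abs_mult mult.commute)
        qed
      qed
    qed
  qed
  have fub: "(LINT s|lborel. LINT t|lborel. F t s) = (LINT t|lborel. LINT s|lborel. F t s)"
    using lborel_pair.Fubini_integral[OF FI] .
  define Yo where "Yo = (\<lambda>t. LINT s|lborel. indicator {..t} s * g' s)"
  define Xo where "Xo = (\<lambda>s. LINT t|lborel. indicator {..s} t * h' t)"
  have Yom[measurable]: "Yo \<in> borel_measurable lborel"
  proof -
    have "(\<lambda>(t,s). indicator {..t} s * g' s) \<in> borel_measurable (lborel \<Otimes>\<^sub>M lborel)"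
    proof -
      have "(\<lambda>(t::real,s). if s \<le> t then g' s else 0) \<in> borel_measurable (lborel \<Otimes>\<^sub>M lborel)"
        by measurable
      then show ?thesis by (simp add: indicator_def case_prod_beta if_distrib cong: if_cong)
    qed
    then show ?thesis unfolding Yo_def by measurable
  qed
  have Xom[measurable]: "Xo \<in> borel_measurable lborel"
  proof -
    have "(\<lambda>(s,t). indicator {..s} t * h' t) \<in> borel_measurable (lborel \<Otimes>\<^sub>M lborel)"
    proof -
      have "(\<lambda>(s::real,t). if t \<le> s then h' t else 0) \<in> borel_measurable (lborel \<Otimes>\<^sub>M lborel)"
        by measurable
      then show ?thesis by (simp add: indicator_def case_prod_beta if_distrib cong: if_cong)
    qed
    then show ?thesis unfolding Xo_def by measurable
  qed
  define Ha where "Ha = (LINT s|lborel. \<bar>h' s\<bar>)"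
  have Xob: "\<bar>Xo s\<bar> \<le> Ha" for s
  proof -
    have "\<bar>Xo s\<bar> \<le> (LINT t|lborel. \<bar>indicator {..s} t * h' t\<bar>)"
      unfolding Xo_def by (rule integral_abs_bound)
    also have "\<dots> \<le> Ha" unfolding Ha_def
    proof (rule integral_mono)
      show "integrable lborel (\<lambda>t. \<bar>indicator {..s} t * h' t\<bar>)"
        using hsi[of "{..s}"] by (intro integrable_abs) simp
    qed (use hi in \<open>auto simp: indicator_def abs_mult\<close>)
    finally show ?thesis .
  qed
  have inner_t: "(LINT s|lborel. F t s) = h' t * Yo t" for t
    by (simp add: Feq Yo_def)
  have inner_s: "(LINT t|lborel. F t s) = g' s * ((LINT t|lborel. h' t) - Xo s)" for s
  proof -
    have "(LINT t|lborel. indicator {s..} t * h' t) = (LINT t|lborel. h' t - indicator {..s} t * h' t)"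
    proof (rule integral_cong_AE)
      show "AE t in lborel. indicator {s..} t * h' t = h' t - indicator {..s} t * h' t"
        using AE_lborel_singleton[of s] by eventually_elim (auto simp: indicator_def)
    qed (use hsi in auto)
    also have "\<dots> = (LINT t|lborel. h' t) - Xo s"
      unfolding Xo_def by (rule Bochner_Integration.integral_diff) (use hi hsi in auto)
    finally show ?thesis by (simp add: Feq2)
  qed
  have gXi: "integrable lborel (\<lambda>s. Xo s * g' s)"
    by (rule int_bdd_mult[OF gi Xom Xob])
  have L: "(LINT s|lborel. LINT t|lborel. F t s) = (LINT t|lborel. h' t) * (LINT s|lborel. g' s) - (LINT s|lborel. Xo s * g' s)"
    unfolding inner_s using gi gXi by (simp add: right_diff_distrib mult.commute)
  have R: "(LINT t|lborel. LINT s|lborel. F t s) = (LINT t|lborel. h' t * Yo t)"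
    unfolding inner_t ..
  have Yeq: "Yo t = (LINT s:{0..t}|lborel. g s)" if "t \<in> {0..\<sigma>}" for t
    unfolding Yo_def set_lebesgue_integral_def g'_def
    by (rule Bochner_Integration.integral_cong) (use that in \<open>auto simp: indicator_def\<close>)
  have Xeq: "Xo t = (LINT s:{0..t}|lborel. h s)" if "t \<in> {0..\<sigma>}" for t
    unfolding Xo_def set_lebesgue_integral_def h'_def
    by (rule Bochner_Integration.integral_cong) (use that in \<open>auto simp: indicator_def\<close>)
  have e1: "(LINT t:{0..\<sigma>}|lborel. h t * (LINT s:{0..t}|lborel. g s)) = (LINT t|lborel. h' t * Yo t)"
    unfolding set_lebesgue_integral_def[of lborel "{0..\<sigma>}"] h'_def
    by (rule Bochner_Integration.integral_cong) (auto simp: indicator_def Yeq)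
  have e2: "(LINT t:{0..\<sigma>}|lborel. (LINT s:{0..t}|lborel. h s) * g t) = (LINT s|lborel. Xo s * g' s)"
    unfolding set_lebesgue_integral_def[of lborel "{0..\<sigma>}"] g'_def
    by (rule Bochner_Integration.integral_cong) (auto simp: indicator_def Xeq)
  have e3: "(LINT s:{0..\<sigma>}|lborel. h s) = (LINT t|lborel. h' t)"
    unfolding set_lebesgue_integral_def h'_def by simp
  have e4: "(LINT s:{0..\<sigma>}|lborel. g s) = (LINT t|lborel. g' t)"
    unfolding set_lebesgue_integral_def g'_def by simp
  show ?thesis unfolding e1 e2 e3 e4 using fub L R by simp
qed


lemma si_cont_mult:
  fixes f g :: "real \<Rightarrow> real"
  assumes f: "set_integrable lborel {a..b} f" and g: "continuous_on {a..b} g"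
  shows "set_integrable lborel {a..b} (\<lambda>t. g t * f t)"
proof -
  obtain B where B0: "\<forall>t\<in>{a..b}. norm (g t) \<le> B"
    using compact_imp_bounded[OF compact_continuous_image[OF g compact_Icc]]
    unfolding bounded_iff by auto
  then have B: "\<And>t. t \<in> {a..b} \<Longrightarrow> norm (g t) \<le> max B 0" by (meson max.coboundedI1)
  have fi: "integrable lborel (\<lambda>t. indicator {a..b} t * f t)"
    using f by (simp add: set_integrable_def)
  have gm: "(\<lambda>t. indicator {a..b} t * g t) \<in> borel_measurable lborel"
    using borel_measurable_continuous_on_indicator[of "{a..b}" g] g by simp
  have "integrable lborel (\<lambda>t. (indicator {a..b} t * g t) * (indicator {a..b} t * f t))"
    by (rule int_bdd_mult[OF fi gm, of "max B 0"]) (use B in \<open>auto simp: indicator_def\<close>)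
  moreover have "(\<lambda>t. (indicator {a..b} t * g t) * (indicator {a..b} t * f t)) = (\<lambda>x. indicator {a..b} x *\<^sub>R (g x * f x))"
    by (auto simp: indicator_def fun_eq_iff)
  ultimately show ?thesis unfolding set_integrable_def by simp
qed

lemma FTC_set:
  fixes F f :: "real \<Rightarrow> real"
  assumes "a \<le> b" "\<And>x. x \<in> {a..b} \<Longrightarrow> (F has_real_derivative f x) (at x)"
    and "continuous_on {a..b} f"
  shows "(LINT x:{a..b}|lborel. f x) = F b - F a"
proof -
  have "integral\<^sup>L lborel (\<lambda>x. indicator {a .. b} x *\<^sub>R f x) = F b - F a"
  proof (rule integral_FTC_atLeastAtMost[OF assms(1) _ assms(3)])
    fix x assume "a \<le> x" "x \<le> b"
    then have "(F has_real_derivative f x) (at x)" using assms(2) by auto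
    then show "(F has_vector_derivative f x) (at x within {a..b})"
      by (simp add: has_real_derivative_iff_has_vector_derivative has_vector_derivative_at_within)
  qed
  then show ?thesis by (simp add: set_lebesgue_integral_def)
qed

lemma int_exp_lin:
  fixes \<beta> t :: real
  assumes "0 \<le> t"
  shows "(LINT s:{0..t}|lborel. \<beta> * exp (\<beta> * s)) = exp (\<beta> * t) - 1"
proof -
  have "(LINT s:{0..t}|lborel. \<beta> * exp (\<beta> * s)) = exp (\<beta> * t) - exp (\<beta> * 0)"
    by (rule FTC_set[OF assms]) (auto intro!: derivative_eq_intros continuous_intros)
  then show ?thesis by simp
qed

lemma int_exp_lin':
  fixes \<beta> t :: real
  assumes "0 \<le> t"
  shows "\<beta> * (LINT s:{0..t}|lborel. exp (\<beta> * s)) = exp (\<beta> * t) - 1"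
  using int_exp_lin[OF assms, of \<beta>] by simp

lemma int_exp_sq:
  fixes \<beta> t :: real
  assumes "0 \<le> t" "\<beta> \<noteq> 0"
  shows "(LINT s:{0..t}|lborel. (exp (\<beta> * s))\<^sup>2) = (exp (2 * \<beta> * t) - 1) / (2 * \<beta>)"
proof -
  have "(LINT s:{0..t}|lborel. (exp (\<beta> * s))\<^sup>2) = (LINT s:{0..t}|lborel. (1 / (2*\<beta>)) * ((2*\<beta>) * exp ((2*\<beta>) * s)))"
    by (rule set_lebesgue_integral_cong) (use assms in \<open>auto simp: power2_eq_square exp_add[symmetric]\<close>)
  also have "\<dots> = (1 / (2*\<beta>)) * (exp (2 * \<beta> * t) - 1)"
  proof -
    have "2 * \<beta> * (LINT s:{0..t}|lborel. exp (2 * \<beta> * s)) = exp (2 * \<beta> * t) - 1"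
      using int_exp_lin'[OF assms(1), of "2*\<beta>"] by simp
    then show ?thesis using assms(2) by (simp add: field_simps)
  qed
  finally show ?thesis using assms by (simp add: field_simps)
qed

lemma expw:
  fixes y w :: "real \<Rightarrow> real" and \<beta> \<sigma> :: real
  assumes yi: "set_integrable lborel {0..\<sigma>} y" and wi: "set_integrable lborel {0..\<sigma>} w"
    and eq: "\<And>t. t \<in> {0..\<sigma>} \<Longrightarrow> y t = (LINT s:{0..t}|lborel. - \<beta> * y s + w s)"
    and t: "t \<in> {0..\<sigma>}"
  shows "exp (\<beta> * t) * y t = (LINT s:{0..t}|lborel. exp (\<beta> * s) * w s)"
proof -
  have sub: "{0..t} \<subseteq> {0..\<sigma>}" using t by auto
  have yit: "set_integrable lborel {0..t} y" by (rule set_integrable_subset[OF yi _ sub]) auto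
  have wit: "set_integrable lborel {0..t} w" by (rule set_integrable_subset[OF wi _ sub]) auto
  define g where "g = (\<lambda>s. - \<beta> * y s + w s)"
  have gi: "set_integrable lborel {0..t} g" unfolding g_def using yit wit by auto
  define h where "h = (\<lambda>s::real. \<beta> * exp (\<beta> * s))"
  have hi: "set_integrable lborel {0..t} h" unfolding h_def
    by (rule borel_integrable_atLeastAtMost') (auto intro!: continuous_intros)
  have I: "(LINT r:{0..t}|lborel. h r * (LINT s:{0..r}|lborel. g s))
       + (LINT r:{0..t}|lborel. (LINT s:{0..r}|lborel. h s) * g r)
       = (LINT s:{0..t}|lborel. h s) * (LINT s:{0..t}|lborel. g s)"
    by (rule ibp[OF gi hi])
  have c1: "(LINT r:{0..t}|lborel. h r * (LINT s:{0..r}|lborel. g s)) = (LINT r:{0..t}|lborel. h r * y r)"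
    by (rule set_lebesgue_integral_cong) (use t eq in \<open>auto simp: g_def\<close>)
  have c2: "(LINT r:{0..t}|lborel. (LINT s:{0..r}|lborel. h s) * g r) = (LINT r:{0..t}|lborel. (exp (\<beta> * r) - 1) * g r)"
    by (rule set_lebesgue_integral_cong) (auto simp: h_def int_exp_lin')
  have t0: "0 \<le> t" using t by simp
  have c3: "(LINT s:{0..t}|lborel. h s) = exp (\<beta> * t) - 1" using int_exp_lin'[OF t0, of \<beta>] by (simp add: h_def)
  have c4: "(LINT s:{0..t}|lborel. g s) = y t" using eq[OF t] by (simp add: g_def)
  have i1: "set_integrable lborel {0..t} (\<lambda>r. h r * y r)"
    unfolding h_def by (rule si_cont_mult[OF yit]) (auto intro!: continuous_intros)
  have i2: "set_integrable lborel {0..t} (\<lambda>r. (exp (\<beta> * r) - 1) * g r)"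
    by (rule si_cont_mult[OF gi]) (auto intro!: continuous_intros)
  have "exp (\<beta> * t) * y t = (exp (\<beta> * t) - 1) * y t + y t" by algebra
  also have "\<dots> = (LINT r:{0..t}|lborel. h r * y r) + (LINT r:{0..t}|lborel. (exp (\<beta> * r) - 1) * g r)
        + (LINT s:{0..t}|lborel. g s)"
    using I c1 c2 c3 c4 by simp
  also have "\<dots> = (LINT r:{0..t}|lborel. h r * y r + (exp (\<beta> * r) - 1) * g r + g r)"
    using i1 i2 gi by (simp add: set_integral_add)
  also have "\<dots> = (LINT s:{0..t}|lborel. exp (\<beta> * s) * w s)"
    by (rule set_lebesgue_integral_cong) (auto simp: h_def g_def algebra_simps)
  finally show ?thesis .
qed



lemma quad_disc:
  fixes a b c :: real
  assumes "\<And>l. 0 \<le> a - 2 * l * c + l\<^sup>2 * b" and b0: "0 \<le> b"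
  shows "c\<^sup>2 \<le> a * b"
proof (cases "b = 0")
  case True
  show ?thesis
  proof (cases "c = 0")
    case False
    have "0 \<le> a - 2 * ((a + 1) / (2 * c)) * c + ((a + 1) / (2 * c))\<^sup>2 * b" by (rule assms(1))
    then show ?thesis using False True by (simp add: field_simps)
  qed (use assms(1)[of 0] True in simp)
next
  case False
  then have bp: "b > 0" using b0 by simp
  have "0 \<le> a - 2 * (c / b) * c + (c / b)\<^sup>2 * b" by (rule assms(1))
  also have "\<dots> = a - c\<^sup>2 / b" using bp by (simp add: field_simps power2_eq_square)
  finally show ?thesis using bp by (simp add: field_simps)
qed

lemma set_integral_nonneg_real:
  fixes f :: "real \<Rightarrow> real"
  assumes "\<And>x. x \<in> A \<Longrightarrow> 0 \<le> f x"
  shows "0 \<le> (LINT x:A|lborel. f x)"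
  unfolding set_lebesgue_integral_def
  by (rule integral_nonneg_AE) (use assms in \<open>auto simp: indicator_def\<close>)

lemma set_integral_mono_set:
  fixes f :: "real \<Rightarrow> real"
  assumes "set_integrable lborel B f" "A \<subseteq> B" "A \<in> sets lborel" "\<And>x. x \<in> B \<Longrightarrow> 0 \<le> f x"
  shows "(LINT x:A|lborel. f x) \<le> (LINT x:B|lborel. f x)"
proof -
  have "set_integrable lborel A f" by (rule set_integrable_subset[OF assms(1,3,2)])
  then show ?thesis using assms unfolding set_lebesgue_integral_def set_integrable_def
    by (intro integral_mono) (auto simp: indicator_def subset_eq)
qed

lemma set_CS:
  fixes f g :: "real \<Rightarrow> real"
  assumes f2: "set_integrable lborel A (\<lambda>t. (f t)\<^sup>2)" and g2: "set_integrable lborel A (\<lambda>t. (g t)\<^sup>2)"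
    and fg: "set_integrable lborel A (\<lambda>t. f t * g t)" and A: "A \<in> sets lborel"
  shows "(LINT t:A|lborel. f t * g t)\<^sup>2 \<le> (LINT t:A|lborel. (f t)\<^sup>2) * (LINT t:A|lborel. (g t)\<^sup>2)"
proof (rule quad_disc)
  fix l :: real
  have "0 \<le> (LINT t:A|lborel. (f t - l * g t)\<^sup>2)" by (rule set_integral_nonneg_real) simp
  also have "(LINT t:A|lborel. (f t - l * g t)\<^sup>2) = (LINT t:A|lborel. (f t)\<^sup>2 - (2 * l) * (f t * g t) + l\<^sup>2 * (g t)\<^sup>2)"
    by (rule set_lebesgue_integral_cong) (use A in \<open>auto simp: power2_eq_square algebra_simps\<close>)
  also have "\<dots> = (LINT t:A|lborel. (f t)\<^sup>2) - 2 * l * (LINT t:A|lborel. f t * g t) + l\<^sup>2 * (LINT t:A|lborel. (g t)\<^sup>2)"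
    using f2 g2 fg by (simp add: set_integral_add set_integral_diff)
  finally show "0 \<le> (LINT t:A|lborel. (f t)\<^sup>2) - 2 * l * (LINT t:A|lborel. f t * g t) + l\<^sup>2 * (LINT t:A|lborel. (g t)\<^sup>2)" .
qed (rule set_integral_nonneg_real, simp)


lemma oneD_k:
  fixes y w :: "real \<Rightarrow> real" and \<beta> \<sigma> :: real
  assumes \<beta>: "0 < \<beta>" and \<sigma>: "0 < \<sigma>"
    and yi: "set_integrable lborel {0..\<sigma>} y" and wi: "set_integrable lborel {0..\<sigma>} w"
    and w2: "set_integrable lborel {0..\<sigma>} (\<lambda>t. (w t)\<^sup>2)"
    and eq: "\<And>t. t \<in> {0..\<sigma>} \<Longrightarrow> y t = (LINT s:{0..t}|lborel. - \<beta> * y s + w s)"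
  shows "\<exists>R\<ge>0. (LINT t:{0..\<sigma>}|lborel. (w t)\<^sup>2) = R + 2 * \<beta> / (1 - exp (-2 * \<beta> * \<sigma>)) * (y \<sigma>)\<^sup>2 \<and>
     (\<forall>t0\<in>{0..\<sigma>}. (y t0 - (exp (\<beta> * t0) - exp (- \<beta> * t0)) / (exp (\<beta> * \<sigma>) - exp (- \<beta> * \<sigma>)) * y \<sigma>)\<^sup>2 \<le> R / (2 * \<beta>))"
proof -
  define \<phi> where "\<phi> = (\<lambda>s::real. exp (\<beta> * s))"
  have \<phi>c: "continuous_on A \<phi>" for A unfolding \<phi>_def by (auto intro!: continuous_intros)
  have P: "exp (\<beta> * t) * y t = (LINT s:{0..t}|lborel. \<phi> s * w s)" if "t \<in> {0..\<sigma>}" for t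
    unfolding \<phi>_def by (rule expw[OF yi wi eq that])
  have E: "(LINT s:{0..t}|lborel. (\<phi> s)\<^sup>2) = (exp (2 * \<beta> * t) - 1) / (2 * \<beta>)" if "0 \<le> t" for t
    unfolding \<phi>_def using int_exp_sq[OF that] \<beta> by simp
  define E\<sigma> where "E\<sigma> = (exp (2 * \<beta> * \<sigma>) - 1) / (2 * \<beta>)"
  have E\<sigma>pos: "E\<sigma> > 0" using \<beta> \<sigma> by (simp add: E\<sigma>_def)
  define P\<sigma> where "P\<sigma> = exp (\<beta> * \<sigma>) * y \<sigma>"
  define \<mu> where "\<mu> = P\<sigma> / E\<sigma>"
  define r where "r = (\<lambda>s. w s - \<mu> * \<phi> s)"
  define R where "R = (LINT t:{0..\<sigma>}|lborel. (r t)\<^sup>2)"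
  have sub: "{0..t} \<subseteq> {0..\<sigma>}" if "t \<le> \<sigma>" for t using that by auto
  have \<phi>wi: "set_integrable lborel {0..t} (\<lambda>s. \<phi> s * w s)" if "t \<le> \<sigma>" for t
    by (rule set_integrable_subset[OF si_cont_mult[OF wi \<phi>c] _ sub[OF that]]) auto
  have \<phi>2i: "set_integrable lborel {0..t} (\<lambda>s. (\<phi> s)\<^sup>2)" for t
    by (rule borel_integrable_atLeastAtMost') (auto simp: \<phi>_def intro!: continuous_intros)
  have w2t: "set_integrable lborel {0..t} (\<lambda>s. (w s)\<^sup>2)" if "t \<le> \<sigma>" for t
    by (rule set_integrable_subset[OF w2 _ sub[OF that]]) auto
  have rf: "(\<lambda>s. (r s)\<^sup>2) = (\<lambda>s. (w s)\<^sup>2 - (2 * \<mu>) * (\<phi> s * w s) + \<mu>\<^sup>2 * (\<phi> s)\<^sup>2)"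
    by (auto simp: r_def fun_eq_iff power2_eq_square algebra_simps)
  have r2i: "set_integrable lborel {0..t} (\<lambda>s. (r s)\<^sup>2)" if "t \<le> \<sigma>" for t
    unfolding rf using w2t[OF that] \<phi>wi[OF that] \<phi>2i[of t] by auto
  have rexp: "(LINT s:{0..t}|lborel. (r s)\<^sup>2) = (LINT s:{0..t}|lborel. (w s)\<^sup>2) - 2 * \<mu> * (LINT s:{0..t}|lborel. \<phi> s * w s) + \<mu>\<^sup>2 * (LINT s:{0..t}|lborel. (\<phi> s)\<^sup>2)"
    if "t \<le> \<sigma>" for t
    unfolding rf using w2t[OF that] \<phi>wi[OF that] \<phi>2i[of t] by (simp add: set_integral_add set_integral_diff)
  have R0: "0 \<le> R" unfolding R_def by (rule set_integral_nonneg_real) simp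
  have Pint: "(LINT s:{0..\<sigma>}|lborel. \<phi> s * w s) = P\<sigma>" using P[of \<sigma>] \<sigma> by (simp add: P\<sigma>_def)
  have Eint: "(LINT s:{0..\<sigma>}|lborel. (\<phi> s)\<^sup>2) = E\<sigma>" using E[of \<sigma>] \<sigma> by (simp add: E\<sigma>_def)
  have Rform: "R = (LINT t:{0..\<sigma>}|lborel. (w t)\<^sup>2) - P\<sigma>\<^sup>2 / E\<sigma>"
    unfolding R_def rexp[OF order_refl] Pint Eint \<mu>_def using E\<sigma>pos
    by (simp add: field_simps power2_eq_square)
  define p where "p = exp (\<beta> * \<sigma>)"
  have p1: "p > 1" unfolding p_def using \<beta> \<sigma> by simp
  have e2: "exp (2 * \<beta> * \<sigma>) = p\<^sup>2" unfolding p_def by (simp add: power2_eq_square exp_add[symmetric])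
  have em2: "exp (-2 * \<beta> * \<sigma>) = 1 / p\<^sup>2"
  proof -
    have "exp (-2 * \<beta> * \<sigma>) = inverse (exp (2 * \<beta> * \<sigma>))" by (simp add: exp_minus[symmetric])
    then show ?thesis using e2 by (simp add: inverse_eq_divide)
  qed
  have key: "P\<sigma>\<^sup>2 / E\<sigma> = 2 * \<beta> / (1 - exp (-2 * \<beta> * \<sigma>)) * (y \<sigma>)\<^sup>2"
    unfolding P\<sigma>_def E\<sigma>_def e2 em2 p_def[symmetric] using p1 \<beta>
    by (simp add: field_simps power2_eq_square)
  have part1: "(LINT t:{0..\<sigma>}|lborel. (w t)\<^sup>2) = R + 2 * \<beta> / (1 - exp (-2 * \<beta> * \<sigma>)) * (y \<sigma>)\<^sup>2"
    using Rform key by simp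
  have part2: "(y t0 - (exp (\<beta> * t0) - exp (- \<beta> * t0)) / (exp (\<beta> * \<sigma>) - exp (- \<beta> * \<sigma>)) * y \<sigma>)\<^sup>2 \<le> R / (2 * \<beta>)"
    if t0: "t0 \<in> {0..\<sigma>}" for t0
  proof -
    have t0le: "t0 \<le> \<sigma>" and t00: "0 \<le> t0" using t0 by auto
    have \<phi>ri: "set_integrable lborel {0..t0} (\<lambda>s. \<phi> s * r s)"
    proof -
      have "(\<lambda>s. \<phi> s * r s) = (\<lambda>s. \<phi> s * w s - \<mu> * (\<phi> s)\<^sup>2)"
        by (auto simp: r_def fun_eq_iff power2_eq_square algebra_simps)
      then show ?thesis using \<phi>wi[OF t0le] \<phi>2i[of t0] by auto
    qed
    have split: "(LINT s:{0..t0}|lborel. \<phi> s * w s) = (LINT s:{0..t0}|lborel. \<phi> s * r s) + \<mu> * (LINT s:{0..t0}|lborel. (\<phi> s)\<^sup>2)"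
    proof -
      have "(LINT s:{0..t0}|lborel. \<phi> s * w s) = (LINT s:{0..t0}|lborel. \<phi> s * r s + \<mu> * (\<phi> s)\<^sup>2)"
        by (rule set_lebesgue_integral_cong) (auto simp: r_def power2_eq_square algebra_simps)
      then show ?thesis using \<phi>ri \<phi>2i[of t0] by simp
    qed
    define I where "I = (LINT s:{0..t0}|lborel. \<phi> s * r s)"
    define q where "q = exp (\<beta> * t0)"
    have q1: "q \<ge> 1" unfolding q_def using \<beta> t00 by simp
    have eq2: "exp (2 * \<beta> * t0) = q\<^sup>2" unfolding q_def by (simp add: power2_eq_square exp_add[symmetric])
    have CS: "I\<^sup>2 \<le> (LINT s:{0..t0}|lborel. (\<phi> s)\<^sup>2) * (LINT s:{0..t0}|lborel. (r s)\<^sup>2)"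
      unfolding I_def by (rule set_CS[OF \<phi>2i r2i[OF t0le] \<phi>ri]) auto
    have Rt0: "(LINT s:{0..t0}|lborel. (r s)\<^sup>2) \<le> R"
      unfolding R_def by (rule set_integral_mono_set[OF r2i[OF order_refl]]) (use t0le in auto)
    have Et0: "(LINT s:{0..t0}|lborel. (\<phi> s)\<^sup>2) = (q\<^sup>2 - 1) / (2 * \<beta>)"
      using E[OF t00] eq2 by simp
    have Et0n: "0 \<le> (q\<^sup>2 - 1) / (2 * \<beta>)" using q1 \<beta> by (simp add: one_le_power)
    have CS2: "I\<^sup>2 \<le> (q\<^sup>2 - 1) / (2 * \<beta>) * R"
      using CS Rt0 Et0 Et0n by (metis mult_left_mono order_trans)
    have yt0: "q * y t0 = I + \<mu> * ((q\<^sup>2 - 1) / (2 * \<beta>))"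
      using P[OF t0] split Et0 by (simp add: q_def I_def)
    have rho: "(exp (\<beta> * t0) - exp (- \<beta> * t0)) / (exp (\<beta> * \<sigma>) - exp (- \<beta> * \<sigma>)) * y \<sigma>
        = \<mu> * ((q\<^sup>2 - 1) / (2 * \<beta>)) / q"
    proof -
      have a1: "exp (- \<beta> * t0) = 1 / q" unfolding q_def by (simp add: exp_minus inverse_eq_divide)
      have a2: "exp (- \<beta> * \<sigma>) = 1 / p" unfolding p_def by (simp add: exp_minus inverse_eq_divide)
      have d1: "p * (p * q) - q > 0"
      proof -
        have "p * p > 1" using p1 by (rule less_1_mult[OF p1])
        then have "q * (p * p - 1) > 0" using q1 by (intro mult_pos_pos) auto
        then show ?thesis by (simp add: algebra_simps)
      qed
      then have d2: "\<beta> * (p * (p * (q * 2))) - \<beta> * (q * 2) \<noteq> 0" using \<beta>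
      proof -
        have "\<beta> * (p * (p * (q * 2))) - \<beta> * (q * 2) = (2 * \<beta>) * (p * (p * q) - q)" by (simp add: algebra_simps)
        moreover have "(2 * \<beta>) * (p * (p * q) - q) > 0" using \<beta> d1 by (intro mult_pos_pos) auto
        ultimately show ?thesis by linarith
      qed
      show ?thesis unfolding a1 a2 \<mu>_def P\<sigma>_def E\<sigma>_def e2 p_def[symmetric] q_def[symmetric] using p1 q1 \<beta> d1 d2
        by (simp add: field_simps power2_eq_square)
    qed
    have diff: "y t0 - (exp (\<beta> * t0) - exp (- \<beta> * t0)) / (exp (\<beta> * \<sigma>) - exp (- \<beta> * \<sigma>)) * y \<sigma> = I / q"
      unfolding rho using yt0 q1 \<beta> by (simp add: field_simps)
    have "(I / q)\<^sup>2 = I\<^sup>2 / q\<^sup>2" by (simp add: power_divide)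
    also have "\<dots> \<le> ((q\<^sup>2 - 1) / (2 * \<beta>) * R) / q\<^sup>2"
      using CS2 q1 by (intro divide_right_mono) auto
    also have "\<dots> \<le> R / (2 * \<beta>)"
    proof -
      have "(q\<^sup>2 - 1) / q\<^sup>2 \<le> 1" using q1 by (simp add: field_simps)
      then have "(q\<^sup>2 - 1) / q\<^sup>2 * (R / (2 * \<beta>)) \<le> 1 * (R / (2 * \<beta>))"
        using R0 \<beta> by (intro mult_right_mono) auto
      then show ?thesis by (simp add: field_simps)
    qed
    finally show ?thesis unfolding diff .
  qed
  show ?thesis using R0 part1 part2 by blast
qed


lemma oneD_1:
  fixes y w :: "real \<Rightarrow> real" and \<alpha> \<sigma> :: real
  assumes \<alpha>: "0 < \<alpha>" and \<sigma>: "0 < \<sigma>"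
    and yc: "continuous_on {0..\<sigma>} y" and wi: "set_integrable lborel {0..\<sigma>} w"
    and w2: "set_integrable lborel {0..\<sigma>} (\<lambda>t. (w t)\<^sup>2)"
    and eq: "\<And>t. t \<in> {0..\<sigma>} \<Longrightarrow> y t = (LINT s:{0..t}|lborel. - (3 * \<alpha>) * y s + w s)"
  shows "\<exists>R\<ge>0. (LINT t:{0..\<sigma>}|lborel. (1/2) * (w t)\<^sup>2 - 4 * \<alpha>\<^sup>2 * (y t)\<^sup>2) = R + 2 * \<alpha> * (y \<sigma>)\<^sup>2 \<and>
     (\<forall>t0\<in>{0..\<sigma>}. (y t0)\<^sup>2 \<le> exp (2 * \<alpha> * \<sigma>) / \<alpha> * R)"
proof -
  have yi: "set_integrable lborel {0..\<sigma>} y" by (rule borel_integrable_atLeastAtMost'[OF yc])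
  have y2i: "set_integrable lborel {0..\<sigma>} (\<lambda>t. (y t)\<^sup>2)"
    by (rule borel_integrable_atLeastAtMost') (auto intro!: continuous_intros yc)
  have ywi: "set_integrable lborel {0..\<sigma>} (\<lambda>t. y t * w t)" by (rule si_cont_mult[OF wi yc])
  define g where "g = (\<lambda>s. - (3 * \<alpha>) * y s + w s)"
  have gi: "set_integrable lborel {0..\<sigma>} g" unfolding g_def using yi wi by auto
  define h where "h = (\<lambda>s. w s - 4 * \<alpha> * y s)"
  have hi: "set_integrable lborel {0..\<sigma>} h" unfolding h_def using yi wi by auto
  have hf: "(\<lambda>s. (h s)\<^sup>2) = (\<lambda>s. (w s)\<^sup>2 - (8 * \<alpha>) * (y s * w s) + (16 * \<alpha>\<^sup>2) * (y s)\<^sup>2)"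
    by (auto simp: h_def fun_eq_iff power2_eq_square algebra_simps)
  have h2i: "set_integrable lborel {0..\<sigma>} (\<lambda>s. (h s)\<^sup>2)"
    unfolding hf using w2 ywi y2i by auto
  define R where "R = (LINT t:{0..\<sigma>}|lborel. (1/2) * (h t)\<^sup>2)"
  have R0: "0 \<le> R" unfolding R_def by (rule set_integral_nonneg_real) simp
  have I: "(LINT t:{0..\<sigma>}|lborel. g t * (LINT s:{0..t}|lborel. g s))
       + (LINT t:{0..\<sigma>}|lborel. (LINT s:{0..t}|lborel. g s) * g t)
       = (LINT s:{0..\<sigma>}|lborel. g s) * (LINT s:{0..\<sigma>}|lborel. g s)"
    by (rule ibp[OF gi gi])
  have c1: "(LINT t:{0..\<sigma>}|lborel. g t * (LINT s:{0..t}|lborel. g s)) = (LINT t:{0..\<sigma>}|lborel. y t * g t)"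
    by (rule set_lebesgue_integral_cong) (use eq in \<open>auto simp: g_def\<close>)
  have c2: "(LINT t:{0..\<sigma>}|lborel. (LINT s:{0..t}|lborel. g s) * g t) = (LINT t:{0..\<sigma>}|lborel. y t * g t)"
    by (rule set_lebesgue_integral_cong) (use eq in \<open>auto simp: g_def\<close>)
  have c3: "(LINT s:{0..\<sigma>}|lborel. g s) = y \<sigma>" using eq[of \<sigma>] \<sigma> by (simp add: g_def)
  have yg: "2 * (LINT t:{0..\<sigma>}|lborel. y t * g t) = (y \<sigma>)\<^sup>2"
    using I c1 c2 c3 by (simp add: power2_eq_square)
  have ygi: "set_integrable lborel {0..\<sigma>} (\<lambda>t. y t * g t)" by (rule si_cont_mult[OF gi yc])
  have "(LINT t:{0..\<sigma>}|lborel. (1/2) * (w t)\<^sup>2 - 4 * \<alpha>\<^sup>2 * (y t)\<^sup>2)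
      = (LINT t:{0..\<sigma>}|lborel. (1/2) * (h t)\<^sup>2 + (4 * \<alpha>) * (y t * g t))"
    by (rule set_lebesgue_integral_cong) (auto simp: h_def g_def power2_eq_square algebra_simps)
  also have "\<dots> = R + (4 * \<alpha>) * (LINT t:{0..\<sigma>}|lborel. y t * g t)"
    unfolding R_def using h2i ygi by simp
  also have "\<dots> = R + 2 * \<alpha> * (y \<sigma>)\<^sup>2" using yg by (simp add: algebra_simps)
  finally have part1: "(LINT t:{0..\<sigma>}|lborel. (1/2) * (w t)\<^sup>2 - 4 * \<alpha>\<^sup>2 * (y t)\<^sup>2) = R + 2 * \<alpha> * (y \<sigma>)\<^sup>2" .
  have eq': "y t = (LINT s:{0..t}|lborel. - (- \<alpha>) * y s + h s)" if "t \<in> {0..\<sigma>}" for t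
    using eq[OF that] by (simp add: h_def algebra_simps)
  have part2: "(y t0)\<^sup>2 \<le> exp (2 * \<alpha> * \<sigma>) / \<alpha> * R" if t0: "t0 \<in> {0..\<sigma>}" for t0
  proof -
    have t0le: "t0 \<le> \<sigma>" and t00: "0 \<le> t0" using t0 by auto
    have sub: "{0..t0} \<subseteq> {0..\<sigma>}" using t0le by auto
    have ew: "exp (- \<alpha> * t0) * y t0 = (LINT s:{0..t0}|lborel. exp (- \<alpha> * s) * h s)"
      by (rule expw[OF yi hi eq' t0])
    have ehi: "set_integrable lborel {0..t0} (\<lambda>s. exp (- \<alpha> * s) * h s)"
      by (rule set_integrable_subset[OF si_cont_mult[OF hi] _ sub]) (auto intro!: continuous_intros)
    have e2i: "set_integrable lborel {0..t0} (\<lambda>s. (exp (- \<alpha> * s))\<^sup>2)"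
      by (rule borel_integrable_atLeastAtMost') (auto intro!: continuous_intros)
    have h2t: "set_integrable lborel {0..t0} (\<lambda>s. (h s)\<^sup>2)"
      by (rule set_integrable_subset[OF h2i _ sub]) auto
    have CS: "(exp (- \<alpha> * t0) * y t0)\<^sup>2 \<le> (LINT s:{0..t0}|lborel. (exp (- \<alpha> * s))\<^sup>2) * (LINT s:{0..t0}|lborel. (h s)\<^sup>2)"
      unfolding ew by (rule set_CS[OF e2i h2t ehi]) auto
    have E: "(LINT s:{0..t0}|lborel. (exp (- \<alpha> * s))\<^sup>2) = (exp (2 * (- \<alpha>) * t0) - 1) / (2 * (- \<alpha>))"
      by (rule int_exp_sq[OF t00]) (use \<alpha> in simp)
    have Ele: "(exp (2 * (- \<alpha>) * t0) - 1) / (2 * (- \<alpha>)) \<le> 1 / (2 * \<alpha>)"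
    proof -
      have "0 < exp (2 * (- \<alpha>) * t0)" by simp
      then show ?thesis using \<alpha> by (simp add: field_simps)
    qed
    have Ege: "0 \<le> (exp (2 * (- \<alpha>) * t0) - 1) / (2 * (- \<alpha>))"
    proof -
      have "exp (2 * (- \<alpha>) * t0) \<le> 1" using \<alpha> t00 by (simp add: mult_nonneg_nonneg)
      then show ?thesis using \<alpha> by (simp add: field_simps)
    qed
    have Ht: "(LINT s:{0..t0}|lborel. (h s)\<^sup>2) \<le> 2 * R"
    proof -
      have "(LINT s:{0..t0}|lborel. (h s)\<^sup>2) \<le> (LINT s:{0..\<sigma>}|lborel. (h s)\<^sup>2)"
        by (rule set_integral_mono_set[OF h2i sub]) auto
      then show ?thesis unfolding R_def using h2i by simp
    qed
    have Hn: "0 \<le> (LINT s:{0..t0}|lborel. (h s)\<^sup>2)" by (rule set_integral_nonneg_real) simp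
    have "(exp (- \<alpha> * t0) * y t0)\<^sup>2 \<le> 1 / (2 * \<alpha>) * (2 * R)"
    proof -
      have "(LINT s:{0..t0}|lborel. (exp (- \<alpha> * s))\<^sup>2) * (LINT s:{0..t0}|lborel. (h s)\<^sup>2) \<le> 1 / (2 * \<alpha>) * (2 * R)"
        unfolding E by (rule mult_mono[OF Ele Ht]) (use \<alpha> Hn in auto)
      then show ?thesis using CS by linarith
    qed
    then have A: "(exp (- \<alpha> * t0))\<^sup>2 * (y t0)\<^sup>2 \<le> R / \<alpha>" using \<alpha> by (simp add: power_mult_distrib)
    have ee: "(exp (\<alpha> * t0))\<^sup>2 * (exp (- \<alpha> * t0))\<^sup>2 = 1"
      by (simp add: power_mult_distrib[symmetric] exp_add[symmetric])
    have "(y t0)\<^sup>2 = (exp (\<alpha> * t0))\<^sup>2 * ((exp (- \<alpha> * t0))\<^sup>2 * (y t0)\<^sup>2)"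
      using ee by (simp add: mult.assoc[symmetric])
    also have "\<dots> \<le> (exp (\<alpha> * t0))\<^sup>2 * (R / \<alpha>)" by (rule mult_left_mono[OF A]) simp
    also have "(exp (\<alpha> * t0))\<^sup>2 = exp (2 * \<alpha> * t0)"
      by (simp add: power2_eq_square exp_add[symmetric])
    also have "exp (2 * \<alpha> * t0) * (R / \<alpha>) \<le> exp (2 * \<alpha> * \<sigma>) * (R / \<alpha>)"
      by (rule mult_right_mono) (use \<alpha> t0le R0 in auto)
    finally show ?thesis by simp
  qed
  show ?thesis using R0 part1 part2 by blast
qed



definition ONS :: "(nat \<Rightarrow> 'h::real_inner) \<Rightarrow> bool" where
  "ONS e \<longleftrightarrow> (\<forall>j\<ge>1. \<forall>k\<ge>1. inner (e j) (e k) = (if j = k then 1 else 0))"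

lemma ONS_inner_sum:
  assumes "ONS e" "K \<subseteq> {1..}" "j \<in> K" "finite K"
  shows "inner (\<Sum>k\<in>K. u k *\<^sub>R e k) (e j) = u j"
proof -
  have "inner (\<Sum>k\<in>K. u k *\<^sub>R e k) (e j) = (\<Sum>k\<in>K. u k * inner (e k) (e j))"
    by (simp add: inner_sum_left)
  also have "\<dots> = (\<Sum>k\<in>K. if k = j then u k else 0)"
    by (rule sum.cong) (use assms in \<open>auto simp: ONS_def subset_eq\<close>)
  also have "\<dots> = u j" using assms(3,4) by simp
  finally show ?thesis .
qed

lemma ONS_norm_sum:
  assumes "ONS e" "K \<subseteq> {1..}" "finite K"
  shows "(norm (\<Sum>k\<in>K. u k *\<^sub>R e k))\<^sup>2 = (\<Sum>k\<in>K. (u k)\<^sup>2)"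
proof -
  have "(norm (\<Sum>k\<in>K. u k *\<^sub>R e k))\<^sup>2 = inner (\<Sum>k\<in>K. u k *\<^sub>R e k) (\<Sum>k\<in>K. u k *\<^sub>R e k)"
    by (simp add: power2_norm_eq_inner)
  also have "\<dots> = (\<Sum>j\<in>K. u j * inner (\<Sum>k\<in>K. u k *\<^sub>R e k) (e j))"
    by (simp add: inner_sum_right)
  also have "\<dots> = (\<Sum>j\<in>K. (u j)\<^sup>2)"
    by (rule sum.cong) (use ONS_inner_sum[OF assms(1,2) _ assms(3)] in \<open>auto simp: power2_eq_square\<close>)
  finally show ?thesis .
qed

lemma bessel_id:
  assumes "ONS e" "K \<subseteq> {1..}" "finite K"
  shows "(norm (x - (\<Sum>k\<in>K. inner x (e k) *\<^sub>R e k)))\<^sup>2 = (norm x)\<^sup>2 - (\<Sum>k\<in>K. (inner x (e k))\<^sup>2)"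
proof -
  define p where "p = (\<Sum>k\<in>K. inner x (e k) *\<^sub>R e k)"
  have xp: "inner x p = (\<Sum>k\<in>K. (inner x (e k))\<^sup>2)"
    unfolding p_def by (simp add: inner_sum_right power2_eq_square)
  have pp: "(norm p)\<^sup>2 = (\<Sum>k\<in>K. (inner x (e k))\<^sup>2)"
    unfolding p_def by (rule ONS_norm_sum[OF assms])
  have "(norm (x - p))\<^sup>2 = (norm x)\<^sup>2 - 2 * inner x p + (norm p)\<^sup>2"
    by (simp add: power2_norm_eq_inner inner_diff_left inner_diff_right inner_commute)
  then show ?thesis unfolding p_def[symmetric] using xp pp by simp
qed

lemma bessel:
  assumes "ONS e" "K \<subseteq> {1..}" "finite K"
  shows "(\<Sum>k\<in>K. (inner x (e k))\<^sup>2) \<le> (norm x)\<^sup>2"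
  using bessel_id[OF assms, of x] by (metis diff_ge_0_iff_ge zero_le_power2)

lemma parseval_approx:
  assumes ons: "ONS e" and complete: "closure (span (e ` {1..})) = UNIV" and eps: "0 < \<epsilon>"
  shows "\<exists>K. finite K \<and> K \<subseteq> {1..} \<and> (norm x)\<^sup>2 - \<epsilon> \<le> (\<Sum>k\<in>K. (inner x (e k))\<^sup>2)"
proof -
  have "x \<in> closure (span (e ` {1..}))" using complete by simp
  then obtain s where s: "s \<in> span (e ` {1..})" and ds: "dist s x < sqrt \<epsilon>"
    unfolding closure_approachable using eps by (meson real_sqrt_gt_0_iff)
  obtain S u where S: "finite S" "S \<subseteq> e ` {1..}" and su: "s = (\<Sum>v\<in>S. u v *\<^sub>R v)"
    using s unfolding span_explicit by blast
  have inj: "inj_on e {1..}"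
  proof (rule inj_onI)
    fix j k assume jk: "j \<in> {1..}" "k \<in> {1..}" "e j = e k"
    show "j = k"
    proof (rule ccontr)
      assume "j \<noteq> k"
      have a: "inner (e j) (e k) = (if j = k then 1 else 0)" using jk(1,2) ons unfolding ONS_def by simp
      have b: "inner (e k) (e k) = 1" using jk(2) ons unfolding ONS_def by simp
      show False using a b jk(3) \<open>j \<noteq> k\<close> by simp
    qed
  qed
  define K where "K = inv_into {1..} e ` S"
  have K1: "K \<subseteq> {1..}" unfolding K_def using S inv_into_into[of _ e "{1..}"] by blast
  have Kf: "finite K" unfolding K_def using S by simp
  have fi: "\<And>v. v \<in> S \<Longrightarrow> e (inv_into {1..} e v) = v" using S(2) by (meson f_inv_into_f subsetD)
  have eK: "e ` K = S"
  proof
    show "e ` K \<subseteq> S" unfolding K_def using fi by auto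
    show "S \<subseteq> e ` K"
    proof
      fix v assume v: "v \<in> S"
      then have "v = e (inv_into {1..} e v)" using fi by simp
      moreover have "inv_into {1..} e v \<in> K" unfolding K_def using v by blast
      ultimately show "v \<in> e ` K" by blast
    qed
  qed
  have injK: "inj_on e K" using inj K1 inj_on_subset by blast
  have su': "s = (\<Sum>k\<in>K. u (e k) *\<^sub>R e k)"
    unfolding su eK[symmetric] by (simp add: sum.reindex[OF injK])
  define p where "p = (\<Sum>k\<in>K. inner x (e k) *\<^sub>R e k)"
  have orth: "inner (x - p) (e j) = 0" if "j \<in> K" for j
    unfolding p_def using ONS_inner_sum[OF ons K1 that Kf] by (simp add: inner_diff_left)
  have ps: "p - s = (\<Sum>k\<in>K. (inner x (e k) - u (e k)) *\<^sub>R e k)"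
    unfolding p_def su' by (simp add: sum_subtractf scaleR_diff_left)
  have o2: "inner (x - p) (p - s) = 0"
    unfolding ps by (simp add: inner_sum_right orth)
  have pyth: "(norm ((x - p) + (p - s)))\<^sup>2 = (norm (x - p))\<^sup>2 + (norm (p - s))\<^sup>2"
    unfolding power2_norm_eq_inner inner_add_left inner_add_right using o2 by (simp add: inner_commute)
  have "x - s = (x - p) + (p - s)" by simp
  then have "(norm (x - s))\<^sup>2 = (norm (x - p))\<^sup>2 + (norm (p - s))\<^sup>2" using pyth by metis
  then have "(norm (x - p))\<^sup>2 \<le> (norm (x - s))\<^sup>2" by simp
  also have "(norm (x - s))\<^sup>2 < \<epsilon>"
  proof -
    have "norm (x - s) < sqrt \<epsilon>" using ds by (simp add: dist_norm norm_minus_commute)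
    then have "(norm (x - s))\<^sup>2 < (sqrt \<epsilon>)\<^sup>2" by (intro power_strict_mono) auto
    then show ?thesis using eps by simp
  qed
  finally have "(norm x)\<^sup>2 - (\<Sum>k\<in>K. (inner x (e k))\<^sup>2) < \<epsilon>"
    using bessel_id[OF ons K1 Kf, of x] unfolding p_def by simp
  then show ?thesis using K1 Kf by (intro exI[of _ K]) auto
qed


lemma exp_gt_1_plus:
  fixes x :: real assumes "0 < x" shows "1 + x < exp x"
proof -
  have "1 + x / 2 \<le> exp (x / 2)" by (rule exp_ge_add_one_self)
  then have "(1 + x / 2)\<^sup>2 \<le> (exp (x / 2))\<^sup>2" using assms by (intro power_mono) auto
  also have "(exp (x / 2))\<^sup>2 = exp x" by (simp add: power2_eq_square exp_add[symmetric])
  finally have "(1 + x / 2)\<^sup>2 \<le> exp x" .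
  moreover have "1 + x < (1 + x / 2)\<^sup>2" using assms by (simp add: power2_eq_square field_simps)
  ultimately show ?thesis by linarith
qed

definition cc :: "real \<Rightarrow> real \<Rightarrow> real" where
  "cc \<beta> \<sigma> = 2 * \<beta> / (1 - exp (-2 * \<beta> * \<sigma>))"

lemma cc_pos: assumes "0 < \<beta>" "0 < \<sigma>" shows "0 < cc \<beta> \<sigma>"
proof -
  have "exp (-2 * \<beta> * \<sigma>) < 1" using assms by (simp add: mult_pos_pos)
  then show ?thesis unfolding cc_def using assms by simp
qed

lemma cc_decr:
  assumes "0 < \<beta>" "0 < \<sigma>1" "\<sigma>1 < \<sigma>2"
  shows "cc \<beta> \<sigma>2 < cc \<beta> \<sigma>1"
proof -
  have a: "exp (-2 * \<beta> * \<sigma>2) < exp (-2 * \<beta> * \<sigma>1)" using assms by simp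
  have b: "exp (-2 * \<beta> * \<sigma>1) < 1" using assms by (simp add: mult_pos_pos)
  have "2 * \<beta> / (1 - exp (-2 * \<beta> * \<sigma>2)) < 2 * \<beta> / (1 - exp (-2 * \<beta> * \<sigma>1))"
    using a b assms by (intro divide_strict_left_mono) auto
  then show ?thesis by (simp add: cc_def)
qed

lemma G_decr:
  fixes a b :: real assumes "0 < a" "a < b"
  shows "(1 - exp (- b)) / b < (1 - exp (- a)) / a"
proof -
  have "(\<lambda>x. (1 - exp (- x)) / x) b < (\<lambda>x. (1 - exp (- x)) / x) a"
  proof (rule DERIV_neg_imp_decreasing[OF assms(2)])
    fix x assume x: "a \<le> x" "x \<le> b"
    then have xp: "0 < x" using assms by simp
    have "DERIV (\<lambda>x. (1 - exp (- x)) / x) x :> ((exp (- x)) * x - (1 - exp (- x))) / (x * x)"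
      using xp by (auto intro!: derivative_eq_intros)
    moreover have "((exp (- x)) * x - (1 - exp (- x))) / (x * x) < 0"
    proof -
      have "1 + x < exp x" by (rule exp_gt_1_plus[OF xp])
      then have "exp (- x) * (1 + x) < exp (- x) * exp x" by (intro mult_strict_left_mono) auto
      moreover have "exp (- x) * exp x = 1" by (simp add: exp_add[symmetric])
      ultimately have "exp (- x) * (1 + x) < 1" by simp
      then have "(exp (- x)) * x - (1 - exp (- x)) < 0" by (simp add: algebra_simps)
      then show ?thesis using xp by (simp add: divide_neg_pos)
    qed
    ultimately show "\<exists>y. DERIV (\<lambda>x. (1 - exp (- x)) / x) x :> y \<and> y < 0" by blast
  qed
  then show ?thesis by simp
qed

lemma cc_incr:
  assumes "0 < \<beta>1" "\<beta>1 < \<beta>2" "0 < \<sigma>"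
  shows "cc \<beta>1 \<sigma> < cc \<beta>2 \<sigma>"
proof -
  define x1 where "x1 = 2 * \<beta>1 * \<sigma>"
  define x2 where "x2 = 2 * \<beta>2 * \<sigma>"
  have x1p: "0 < x1" and x12: "x1 < x2" using assms by (auto simp: x1_def x2_def)
  have G: "(1 - exp (- x2)) / x2 < (1 - exp (- x1)) / x1" by (rule G_decr[OF x1p x12])
  have p1: "0 < 1 - exp (- x1)" using x1p by simp
  have p2: "0 < 1 - exp (- x2)" using x1p x12 by simp
  have "x1 / (1 - exp (- x1)) < x2 / (1 - exp (- x2))"
    using G p1 p2 x1p x12 by (simp add: field_simps)
  then have "x1 / (1 - exp (- x1)) / \<sigma> < x2 / (1 - exp (- x2)) / \<sigma>"
    using assms by (intro divide_strict_right_mono) auto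
  moreover have "cc \<beta>1 \<sigma> = x1 / (1 - exp (- x1)) / \<sigma>" "cc \<beta>2 \<sigma> = x2 / (1 - exp (- x2)) / \<sigma>"
    using assms by (auto simp: cc_def x1_def x2_def)
  ultimately show ?thesis by simp
qed

lemma mono_a:
  fixes a :: "nat \<Rightarrow> real"
  assumes "\<forall>k\<ge>1. a k < a (Suc k)" "1 \<le> i" "i \<le> j"
  shows "a i \<le> a j"
  using assms(3)
proof (induction j)
  case 0 then show ?case using assms(2) by simp
next
  case (Suc j)
  show ?case
  proof (cases "i = Suc j")
    case False
    then have "i \<le> j" using Suc.prems by simp
    then have "a i \<le> a j" by (rule Suc.IH)
    moreover have "a j < a (Suc j)" using assms(1) \<open>i \<le> j\<close> assms(2) by simp
    ultimately show ?thesis by simp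
  qed simp
qed


lemma ctrl_inner:
  assumes "ONS e" "1 \<le> k"
  shows "inner (ctrl e a \<eta>) (e k) = (if k = 1 then 2 * a 1 * inner \<eta> (e 1) else 0)"
  using assms by (auto simp: ctrl_def ONS_def)

lemma ctrl_norm:
  assumes "ONS e"
  shows "(norm (ctrl e a \<eta>))\<^sup>2 = 4 * (a 1)\<^sup>2 * (inner \<eta> (e 1))\<^sup>2"
proof -
  have "norm (e 1) = 1" using assms unfolding ONS_def by (metis norm_eq_sqrt_inner order_refl real_sqrt_one)
  then show ?thesis by (simp add: ctrl_def power_mult_distrib)
qed

lemma ONS_norm: "ONS e \<Longrightarrow> 1 \<le> k \<Longrightarrow> norm (e k) = 1"
  unfolding ONS_def by (metis norm_eq_sqrt_inner order_refl real_sqrt_one)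

lemma abs_le_1_sq: fixes x :: real shows "\<bar>x\<bar> \<le> 1 + x\<^sup>2"
proof -
  have "0 \<le> (\<bar>x\<bar> - 1)\<^sup>2" by simp
  then have "0 \<le> \<bar>x\<bar>\<^sup>2 - 2 * \<bar>x\<bar> + 1" by (simp add: power2_eq_square algebra_simps)
  then have "0 \<le> x\<^sup>2 - 2 * \<bar>x\<bar> + 1" by simp
  moreover have "0 \<le> x\<^sup>2" by simp
  ultimately show ?thesis by linarith
qed

lemma coord_integrable:
  fixes v :: "real \<Rightarrow> 'h::{real_inner, second_countable_topology}" and c :: 'h
  assumes L2: "L2_on T v" and c: "norm c \<le> 1" and \<sigma>: "\<sigma> \<le> T"
  shows "set_integrable lborel {0..\<sigma>} (\<lambda>t. inner (v t) c)"
    and "set_integrable lborel {0..\<sigma>} (\<lambda>t. (inner (v t) c)\<^sup>2)"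
    and "set_integrable lborel {0..\<sigma>} (\<lambda>t. (norm (v t))\<^sup>2)"
proof -
  have vm: "(\<lambda>t. indicator {0..T} t *\<^sub>R v t) \<in> borel_measurable lborel"
    using L2 unfolding L2_on_def set_borel_measurable_def by simp
  have v2: "integrable lborel (\<lambda>t. indicator {0..T} t *\<^sub>R (norm (v t))\<^sup>2)"
    using L2 unfolding L2_on_def set_integrable_def by simp
  have wm: "(\<lambda>t. indicator {0..T} t * inner (v t) c) \<in> borel_measurable lborel"
  proof -
    have "(\<lambda>t. inner (indicator {0..T} t *\<^sub>R v t) c) \<in> borel_measurable lborel"
      using vm by measurable
    then show ?thesis by simp
  qed
  have bound: "\<bar>inner (v t) c\<bar> \<le> norm (v t)" for t
    using Cauchy_Schwarz_ineq2[of "v t" c] c by (metis mult_left_le norm_ge_zero order_trans)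
  have w2T: "set_integrable lborel {0..T} (\<lambda>t. (inner (v t) c)\<^sup>2)"
    unfolding set_integrable_def
  proof (rule Bochner_Integration.integrable_bound[OF v2])
    have "(\<lambda>t. (indicator {0..T} t * inner (v t) c)\<^sup>2) \<in> borel_measurable lborel" using wm by measurable
    moreover have "(\<lambda>t. (indicator {0..T} t * inner (v t) c)\<^sup>2) = (\<lambda>t. indicator {0..T} t *\<^sub>R (inner (v t) c)\<^sup>2)"
      by (auto simp: fun_eq_iff indicator_def)
    ultimately show "(\<lambda>t. indicator {0..T} t *\<^sub>R (inner (v t) c)\<^sup>2) \<in> borel_measurable lborel"
      by simp
    show "AE t in lborel. norm (indicator {0..T} t *\<^sub>R (inner (v t) c)\<^sup>2) \<le> norm (indicator {0..T} t *\<^sub>R (norm (v t))\<^sup>2)"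
    proof (rule AE_I2)
      fix t have "(inner (v t) c)\<^sup>2 \<le> (norm (v t))\<^sup>2"
        using bound[of t] by (metis abs_le_square_iff abs_norm_cancel)
      then show "norm (indicator {0..T} t *\<^sub>R (inner (v t) c)\<^sup>2) \<le> norm (indicator {0..T} t *\<^sub>R (norm (v t))\<^sup>2)"
        by (auto simp: indicator_def)
    qed
  qed
  have one: "set_integrable lborel {0..T} (\<lambda>t. 1 + (inner (v t) c)\<^sup>2)"
  proof -
    have "set_integrable lborel {0..T} (\<lambda>t. 1::real)"
      by (rule borel_integrable_atLeastAtMost') auto
    then show ?thesis using w2T by auto
  qed
  have wT: "set_integrable lborel {0..T} (\<lambda>t. inner (v t) c)"
    using one unfolding set_integrable_def
  proof (rule Bochner_Integration.integrable_bound)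
    show "(\<lambda>t. indicator {0..T} t *\<^sub>R inner (v t) c) \<in> borel_measurable lborel" using wm by simp
    show "AE t in lborel. norm (indicator {0..T} t *\<^sub>R inner (v t) c) \<le> norm (indicator {0..T} t *\<^sub>R (1 + (inner (v t) c)\<^sup>2))"
    proof (rule AE_I2)
      fix t
      have "\<bar>inner (v t) c\<bar> \<le> 1 + (inner (v t) c)\<^sup>2"
        by (rule abs_le_1_sq)
      then show "norm (indicator {0..T} t *\<^sub>R inner (v t) c) \<le> norm (indicator {0..T} t *\<^sub>R (1 + (inner (v t) c)\<^sup>2))"
        by (auto simp: indicator_def)
    qed
  qed
  have sub: "{0..\<sigma>} \<subseteq> {0..T}" using \<sigma> by auto
  show "set_integrable lborel {0..\<sigma>} (\<lambda>t. inner (v t) c)" by (rule set_integrable_subset[OF wT _ sub]) auto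
  show "set_integrable lborel {0..\<sigma>} (\<lambda>t. (inner (v t) c)\<^sup>2)" by (rule set_integrable_subset[OF w2T _ sub]) auto
  show "set_integrable lborel {0..\<sigma>} (\<lambda>t. (norm (v t))\<^sup>2)"
    by (rule set_integrable_subset[OF _ _ sub]) (use L2 in \<open>auto simp: L2_on_def\<close>)
qed


lemma set_integral_sum_real:
  fixes f :: "nat \<Rightarrow> real \<Rightarrow> real"
  assumes "\<And>k. k \<in> K \<Longrightarrow> set_integrable lborel A (f k)"
  shows "set_integrable lborel A (\<lambda>t. \<Sum>k\<in>K. f k t)"
    and "(LINT t:A|lborel. (\<Sum>k\<in>K. f k t)) = (\<Sum>k\<in>K. LINT t:A|lborel. f k t)"
proof -
  have i: "\<And>k. k \<in> K \<Longrightarrow> integrable lborel (\<lambda>t. indicator A t *\<^sub>R f k t)"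
    using assms by (simp add: set_integrable_def)
  have e: "(\<lambda>t. indicator A t *\<^sub>R (\<Sum>k\<in>K. f k t)) = (\<lambda>t. \<Sum>k\<in>K. indicator A t *\<^sub>R f k t)"
    by (simp add: sum_distrib_left)
  show "set_integrable lborel A (\<lambda>t. \<Sum>k\<in>K. f k t)"
    unfolding set_integrable_def e using i by (intro Bochner_Integration.integrable_sum) auto
  show "(LINT t:A|lborel. (\<Sum>k\<in>K. f k t)) = (\<Sum>k\<in>K. LINT t:A|lborel. f k t)"
    unfolding set_lebesgue_integral_def e using i by (intro Bochner_Integration.integral_sum) auto
qed

definition rho :: "real \<Rightarrow> real \<Rightarrow> real \<Rightarrow> real" where
  "rho \<beta> \<sigma> t0 = (exp (\<beta> * t0) - exp (- \<beta> * t0)) / (exp (\<beta> * \<sigma>) - exp (- \<beta> * \<sigma>))"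

definition dd :: "(nat \<Rightarrow> real) \<Rightarrow> real \<Rightarrow> nat \<Rightarrow> real" where
  "dd a \<sigma> k = (if k = 1 then 4 * a 1 else cc (a k) \<sigma>)"

lemma LB:
  fixes e :: "nat \<Rightarrow> 'h::{real_inner, second_countable_topology}"
  assumes ons: "ONS e" and a1: "0 < a 1" and apos: "\<forall>k\<ge>2. 0 < a k"
    and yc: "continuous_on {0..T} y" and y0: "y 0 = 0"
    and \<sigma>: "0 < \<sigma>" "\<sigma> \<le> T" and v: "v \<in> Cset e a T y"
    and K: "finite K" "K \<subseteq> {1..}" "1 \<in> K"
  shows "\<exists>R. (\<forall>k\<in>K. 0 \<le> R k) \<and>
     (\<Sum>k\<in>K. R k + (1/2) * dd a \<sigma> k * (inner (y \<sigma>) (e k))\<^sup>2)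
        \<le> (LINT t:{0..\<sigma>}|lborel. (1/2) * (norm (v t))\<^sup>2 - (norm (ctrl e a (y t)))\<^sup>2) \<and>
     (\<forall>t0\<in>{0..\<sigma>}. (inner (y t0) (e 1))\<^sup>2 \<le> exp (2 * a 1 * \<sigma>) / a 1 * R 1) \<and>
     (\<forall>k\<in>K-{1}. \<forall>t0\<in>{0..\<sigma>}. (inner (y t0) (e k) - rho (a k) \<sigma> t0 * inner (y \<sigma>) (e k))\<^sup>2 \<le> R k / a k)"
proof -
  have L2: "L2_on T v" and ws: "weak_sol e a T y v" using v by (auto simp: Cset_def)
  define yk where "yk = (\<lambda>k t. inner (y t) (e k))"
  define wk where "wk = (\<lambda>k t. inner (v t) (e k))"
  have subT: "{0..\<sigma>} \<subseteq> {0..T}" using \<sigma> by auto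
  have ykc: "continuous_on {0..\<sigma>} (yk k)" for k
    unfolding yk_def by (rule continuous_on_subset[OF _ subT]) (auto intro!: continuous_intros yc)
  have wki: "set_integrable lborel {0..\<sigma>} (wk k)" if "1 \<le> k" for k
    unfolding wk_def by (rule coord_integrable(1)[OF L2 _ \<sigma>(2)]) (simp add: ONS_norm[OF ons that])
  have wk2i: "set_integrable lborel {0..\<sigma>} (\<lambda>t. (wk k t)\<^sup>2)" if "1 \<le> k" for k
    unfolding wk_def by (rule coord_integrable(2)[OF L2 _ \<sigma>(2)]) (simp add: ONS_norm[OF ons that])
  have v2i: "set_integrable lborel {0..\<sigma>} (\<lambda>t. (norm (v t))\<^sup>2)"
    by (rule coord_integrable(3)[OF L2 _ \<sigma>(2), of 0]) simp
  define bk where "bk = (\<lambda>k. if k = 1 then 3 * a 1 else a k)"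
  have eqk: "yk k t = (LINT s:{0..t}|lborel. - bk k * yk k s + wk k s)" if k: "1 \<le> k" and t: "t \<in> {0..\<sigma>}" for k t
  proof -
    have tT: "t \<in> {0..T}" using t subT by auto
    have "inner (y t) (e k) - inner (y 0) (e k) = (LINT s:{0..t}|lborel. - a k * inner (y s) (e k)
                                - inner (ctrl e a (y s)) (e k) + inner (v s) (e k))"
      using ws k tT unfolding weak_sol_def by blast
    also have "\<dots> = (LINT s:{0..t}|lborel. - bk k * yk k s + wk k s)"
      by (rule set_lebesgue_integral_cong) (auto simp: ctrl_inner[OF ons k] bk_def yk_def wk_def algebra_simps)
    finally show ?thesis using y0 by (simp add: yk_def)
  qed
  define Q where "Q = (\<lambda>k t. (1/2) * (wk k t)\<^sup>2 - (if k = 1 then 4 * (a 1)\<^sup>2 * (yk 1 t)\<^sup>2 else 0))"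
  have each: "\<exists>r. 0 \<le> r \<and> (LINT t:{0..\<sigma>}|lborel. Q k t) = r + (1/2) * dd a \<sigma> k * (yk k \<sigma>)\<^sup>2 \<and>
      (k = 1 \<longrightarrow> (\<forall>t0\<in>{0..\<sigma>}. (yk 1 t0)\<^sup>2 \<le> exp (2 * a 1 * \<sigma>) / a 1 * r)) \<and>
      (k \<noteq> 1 \<longrightarrow> (\<forall>t0\<in>{0..\<sigma>}. (yk k t0 - rho (a k) \<sigma> t0 * yk k \<sigma>)\<^sup>2 \<le> r / a k))"
    if kK: "k \<in> K" for k
  proof (cases "k = 1")
    case True
    have eq1: "yk 1 t = (LINT s:{0..t}|lborel. - (3 * a 1) * yk 1 s + wk 1 s)" if "t \<in> {0..\<sigma>}" for t
      using eqk[OF _ that, of 1] by (simp add: bk_def)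
    obtain r where r: "r \<ge> 0" "(LINT t:{0..\<sigma>}|lborel. (1/2) * (wk 1 t)\<^sup>2 - 4 * (a 1)\<^sup>2 * (yk 1 t)\<^sup>2) = r + 2 * a 1 * (yk 1 \<sigma>)\<^sup>2"
      "\<forall>t0\<in>{0..\<sigma>}. (yk 1 t0)\<^sup>2 \<le> exp (2 * a 1 * \<sigma>) / a 1 * r"
      using oneD_1[OF a1 \<sigma>(1) ykc wki[of 1] wk2i[of 1] eq1] by auto
    show ?thesis using r True by (intro exI[of _ r]) (simp add: Q_def dd_def)
  next
    case False
    then have k2: "2 \<le> k" using kK K(2) by force
    have ak: "0 < a k" using apos k2 by simp
    have k1: "1 \<le> k" using k2 by simp
    have eq2: "yk k t = (LINT s:{0..t}|lborel. - (a k) * yk k s + wk k s)" if "t \<in> {0..\<sigma>}" for t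
      using eqk[OF k1 that] False by (simp add: bk_def)
    obtain r where r: "r \<ge> 0" "(LINT t:{0..\<sigma>}|lborel. (wk k t)\<^sup>2) = r + 2 * a k / (1 - exp (-2 * a k * \<sigma>)) * (yk k \<sigma>)\<^sup>2"
      "\<forall>t0\<in>{0..\<sigma>}. (yk k t0 - (exp (a k * t0) - exp (- a k * t0)) / (exp (a k * \<sigma>) - exp (- a k * \<sigma>)) * yk k \<sigma>)\<^sup>2 \<le> r / (2 * a k)"
      using oneD_k[OF ak \<sigma>(1) borel_integrable_atLeastAtMost'[OF ykc] wki[OF k1] wk2i[OF k1] eq2] by auto
    have "(LINT t:{0..\<sigma>}|lborel. Q k t) = (1/2) * (LINT t:{0..\<sigma>}|lborel. (wk k t)\<^sup>2)"
      using False by (simp add: Q_def)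
    also have "\<dots> = r / 2 + (1/2) * dd a \<sigma> k * (yk k \<sigma>)\<^sup>2"
      using r(2) False by (simp add: dd_def cc_def algebra_simps)
    finally have A: "(LINT t:{0..\<sigma>}|lborel. Q k t) = r / 2 + (1/2) * dd a \<sigma> k * (yk k \<sigma>)\<^sup>2" .
    have B: "\<forall>t0\<in>{0..\<sigma>}. (yk k t0 - rho (a k) \<sigma> t0 * yk k \<sigma>)\<^sup>2 \<le> (r / 2) / a k"
      using r(3) by (simp add: rho_def)
    show ?thesis using r(1) A B False by (intro exI[of _ "r/2"]) auto
  qed
  then obtain R where R: "\<And>k. k \<in> K \<Longrightarrow> 0 \<le> R k \<and> (LINT t:{0..\<sigma>}|lborel. Q k t) = R k + (1/2) * dd a \<sigma> k * (yk k \<sigma>)\<^sup>2 \<and>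
      (k = 1 \<longrightarrow> (\<forall>t0\<in>{0..\<sigma>}. (yk 1 t0)\<^sup>2 \<le> exp (2 * a 1 * \<sigma>) / a 1 * R k)) \<and>
      (k \<noteq> 1 \<longrightarrow> (\<forall>t0\<in>{0..\<sigma>}. (yk k t0 - rho (a k) \<sigma> t0 * yk k \<sigma>)\<^sup>2 \<le> R k / a k))"
    by metis
  have y12i: "set_integrable lborel {0..\<sigma>} (\<lambda>t. (yk 1 t)\<^sup>2)"
    by (rule borel_integrable_atLeastAtMost') (auto intro!: continuous_intros ykc)
  have Qi: "set_integrable lborel {0..\<sigma>} (Q k)" if "k \<in> K" for k
  proof -
    have k1: "1 \<le> k" using that K(2) by auto
    show ?thesis
    proof (cases "k = 1")
      case True
      then have "Q k = (\<lambda>t. (1/2) * (wk k t)\<^sup>2 - 4 * (a 1)\<^sup>2 * (yk 1 t)\<^sup>2)" by (simp add: Q_def fun_eq_iff)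
      then show ?thesis using wk2i[OF k1] y12i by auto
    next
      case False
      then have "Q k = (\<lambda>t. (1/2) * (wk k t)\<^sup>2)" by (simp add: Q_def fun_eq_iff)
      then show ?thesis using wk2i[OF k1] by auto
    qed
  qed
  have sumQ: "(\<Sum>k\<in>K. Q k t) = (1/2) * (\<Sum>k\<in>K. (wk k t)\<^sup>2) - 4 * (a 1)\<^sup>2 * (yk 1 t)\<^sup>2" for t
  proof -
    have "(\<Sum>k\<in>K. Q k t) = (\<Sum>k\<in>K. (1/2) * (wk k t)\<^sup>2) - (\<Sum>k\<in>K. (if k = 1 then 4 * (a 1)\<^sup>2 * (yk 1 t)\<^sup>2 else 0))"
      unfolding Q_def by (simp add: sum_subtractf)
    also have "(\<Sum>k\<in>K. (if k = 1 then 4 * (a 1)\<^sup>2 * (yk 1 t)\<^sup>2 else 0)) = 4 * (a 1)\<^sup>2 * (yk 1 t)\<^sup>2"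
      using K(1,3) by simp
    finally show ?thesis by (simp add: sum_distrib_left)
  qed
  have "(\<Sum>k\<in>K. R k + (1/2) * dd a \<sigma> k * (inner (y \<sigma>) (e k))\<^sup>2) = (\<Sum>k\<in>K. LINT t:{0..\<sigma>}|lborel. Q k t)"
    by (rule sum.cong) (use R in \<open>auto simp: yk_def\<close>)
  also have "\<dots> = (LINT t:{0..\<sigma>}|lborel. (\<Sum>k\<in>K. Q k t))"
    by (rule set_integral_sum_real(2)[symmetric]) (rule Qi)
  also have "\<dots> \<le> (LINT t:{0..\<sigma>}|lborel. (1/2) * (norm (v t))\<^sup>2 - (norm (ctrl e a (y t)))\<^sup>2)"
  proof (rule set_integral_mono)
    show "set_integrable lborel {0..\<sigma>} (\<lambda>t. \<Sum>k\<in>K. Q k t)"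
      by (rule set_integral_sum_real(1)) (rule Qi)
    have "set_integrable lborel {0..\<sigma>} (\<lambda>t. (1/2) * (norm (v t))\<^sup>2 - 4 * (a 1)\<^sup>2 * (yk 1 t)\<^sup>2)"
      using v2i y12i by auto
    then show "set_integrable lborel {0..\<sigma>} (\<lambda>t. (1/2) * (norm (v t))\<^sup>2 - (norm (ctrl e a (y t)))\<^sup>2)"
      by (simp add: ctrl_norm[OF ons] yk_def)
    fix t
    have "(\<Sum>k\<in>K. (wk k t)\<^sup>2) \<le> (norm (v t))\<^sup>2" unfolding wk_def by (rule bessel[OF ons K(2,1)])
    then show "(\<Sum>k\<in>K. Q k t) \<le> (1/2) * (norm (v t))\<^sup>2 - (norm (ctrl e a (y t)))\<^sup>2"
      unfolding sumQ by (simp add: ctrl_norm[OF ons] yk_def)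
  qed
  finally have main: "(\<Sum>k\<in>K. R k + (1/2) * dd a \<sigma> k * (inner (y \<sigma>) (e k))\<^sup>2)
        \<le> (LINT t:{0..\<sigma>}|lborel. (1/2) * (norm (v t))\<^sup>2 - (norm (ctrl e a (y t)))\<^sup>2)" .
  show ?thesis
  proof (intro exI[of _ R] conjI ballI)
    show "0 \<le> R k" if "k \<in> K" for k using R[OF that] by simp
    show "(inner (y t0) (e 1))\<^sup>2 \<le> exp (2 * a 1 * \<sigma>) / a 1 * R 1" if "t0 \<in> {0..\<sigma>}" for t0
      using R[OF K(3)] that by (simp add: yk_def)
    show "(inner (y t0) (e k) - rho (a k) \<sigma> t0 * inner (y \<sigma>) (e k))\<^sup>2 \<le> R k / a k"
      if "k \<in> K - {1}" "t0 \<in> {0..\<sigma>}" for k t0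
      using R[of k] that by (simp add: yk_def)
  qed (rule main)
qed


lemma competitor:
  fixes e :: "nat \<Rightarrow> 'h::{real_inner, second_countable_topology}"
  assumes ons: "ONS e" and \<beta>: "0 < a 2" and T: "0 < T" and L: "0 < L"
  shows "\<exists>y0. (y0, T) \<in> Tset T L \<and> Ifun e a T y0 T \<le> ereal ((1/2) * cc (a 2) T * L\<^sup>2)"
proof -
  define \<beta> where "\<beta> = a 2"
  have \<beta>0: "0 < \<beta>" using \<beta> by (simp add: \<beta>_def)
  define p where "p = exp (\<beta> * T)"
  have p1: "1 < p" unfolding p_def using \<beta>0 T by simp
  have emT: "exp (- \<beta> * T) = 1 / p" unfolding p_def by (simp add: exp_minus inverse_eq_divide)
  define C where "C = L / (exp (\<beta> * T) - exp (- \<beta> * T))"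
  have den: "0 < exp (\<beta> * T) - exp (- \<beta> * T)" using \<beta>0 T by simp
  have C0: "0 < C" unfolding C_def using den L by simp
  define f where "f = (\<lambda>t. C * (exp (\<beta> * t) - exp (- \<beta> * t)))"
  define g where "g = (\<lambda>t. 2 * \<beta> * C * exp (\<beta> * t))"
  define y0 where "y0 = (\<lambda>t. f t *\<^sub>R e 2)"
  define v0 where "v0 = (\<lambda>t. g t *\<^sub>R e 2)"
  have e2: "norm (e 2) = 1" by (rule ONS_norm[OF ons]) simp
  have inn: "inner (e 2) (e k) = (if k = 2 then 1 else 0)" if "1 \<le> k" for k
    using ons that unfolding ONS_def by simp
  have fT: "f T = L" unfolding f_def C_def using den \<beta>0 T by simp
  have f0: "f 0 = 0" unfolding f_def by simp
  have fmono: "f t \<le> f T" if "t \<le> T" for t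
  proof -
    have "exp (\<beta> * t) \<le> exp (\<beta> * T)" using that \<beta>0 by simp
    moreover have "exp (- \<beta> * T) \<le> exp (- \<beta> * t)" using that \<beta>0 by simp
    ultimately have "exp (\<beta> * t) - exp (- \<beta> * t) \<le> exp (\<beta> * T) - exp (- \<beta> * T)" by linarith
    then show ?thesis unfolding f_def using C0 by (intro mult_left_mono) auto
  qed
  have fpos: "0 \<le> f t" if "0 \<le> t" for t
  proof -
    have "exp (- \<beta> * t) \<le> exp (\<beta> * t)" using that \<beta>0 by simp
    then show ?thesis unfolding f_def using C0 by simp
  qed
  have ctrl0: "ctrl e a (y0 t) = 0" for t
    unfolding ctrl_def y0_def using inn[of 1] by simp
  have ctrl0': "ctrl e a (f t *\<^sub>R e 2) = 0" for t using ctrl0[of t] by (simp add: y0_def)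
  have Ty0: "(y0, T) \<in> Tset T L"
    unfolding Tset_def
  proof (clarify, intro conjI)
    show "continuous_on {0..T} y0" unfolding y0_def f_def by (auto intro!: continuous_intros)
    show "y0 0 = 0" unfolding y0_def f0 by simp
    show "norm (y0 T) = L" unfolding y0_def using fT e2 L by simp
    show "\<forall>t\<in>{0..<T}. norm (y0 t) \<le> L"
      using fmono fpos e2 fT unfolding y0_def by auto
  qed (use T in auto)
  have L2: "L2_on T v0"
    unfolding L2_on_def
  proof
    show "set_borel_measurable lborel {0..T} v0"
      unfolding set_borel_measurable_def v0_def g_def by measurable
    show "set_integrable lborel {0..T} (\<lambda>t. (norm (v0 t))\<^sup>2)"
      unfolding v0_def g_def by (rule borel_integrable_atLeastAtMost') (auto intro!: continuous_intros)
  qed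
  have ws: "weak_sol e a T y0 v0"
    unfolding weak_sol_def
  proof (intro allI impI ballI)
    fix k :: nat and t assume k: "1 \<le> k" and t: "t \<in> {0..T}"
    show "inner (y0 t) (e k) - inner (y0 0) (e k) = (LINT s:{0..t}|lborel. - a k * inner (y0 s) (e k)
                                - inner (ctrl e a (y0 s)) (e k) + inner (v0 s) (e k))"
    proof (cases "k = 2")
      case False
      then show ?thesis using k by (simp add: y0_def v0_def ctrl0' inn)
    next
      case True
      have "(LINT s:{0..t}|lborel. - a k * inner (y0 s) (e k) - inner (ctrl e a (y0 s)) (e k) + inner (v0 s) (e k))
          = (LINT s:{0..t}|lborel. C * \<beta> * (exp (\<beta> * s) + exp (- \<beta> * s)))"
      proof (rule set_lebesgue_integral_cong)
        show "\<forall>x. x \<in> {0..t} \<longrightarrow> - a k * inner (y0 x) (e k) - inner (ctrl e a (y0 x)) (e k) + inner (v0 x) (e k) = C * \<beta> * (exp (\<beta> * x) + exp (- \<beta> * x))"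
        proof (intro allI impI)
          fix x
          have "- a k * inner (y0 x) (e k) - inner (ctrl e a (y0 x)) (e k) + inner (v0 x) (e k) = - \<beta> * f x + g x"
            using True by (simp add: ctrl0' y0_def v0_def inn \<beta>_def)
          also have "\<dots> = C * \<beta> * (exp (\<beta> * x) + exp (- \<beta> * x))" by (simp add: f_def g_def algebra_simps)
          finally show "- a k * inner (y0 x) (e k) - inner (ctrl e a (y0 x)) (e k) + inner (v0 x) (e k) = C * \<beta> * (exp (\<beta> * x) + exp (- \<beta> * x))" .
        qed
      qed simp
      also have "\<dots> = f t - f 0"
        by (rule FTC_set) (use t in \<open>auto simp: f_def algebra_simps intro!: derivative_eq_intros continuous_intros\<close>)
      finally show ?thesis using True by (simp add: y0_def inn f0)
    qed
  qed
  have vC: "v0 \<in> Cset e a T y0" unfolding Cset_def using L2 ws by simp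
  have J: "(LINT t:{0..T}|lborel. (1/2) * (norm (v0 t))\<^sup>2 - (norm (ctrl e a (y0 t)))\<^sup>2)
       = (1/2) * cc (a 2) T * L\<^sup>2"
  proof -
    have "(LINT t:{0..T}|lborel. (1/2) * (norm (v0 t))\<^sup>2 - (norm (ctrl e a (y0 t)))\<^sup>2)
        = (LINT t:{0..T}|lborel. (2 * \<beta>\<^sup>2 * C\<^sup>2) * (exp (\<beta> * t))\<^sup>2)"
      by (rule set_lebesgue_integral_cong) (auto simp: ctrl0 v0_def g_def e2 power_mult_distrib)
    also have "\<dots> = (2 * \<beta>\<^sup>2 * C\<^sup>2) * ((exp (2 * \<beta> * T) - 1) / (2 * \<beta>))"
      using int_exp_sq[of T \<beta>] T \<beta>0 by simp
    also have "\<dots> = (1/2) * cc (a 2) T * L\<^sup>2"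
    proof -
      have e2T: "exp (2 * \<beta> * T) = p\<^sup>2" unfolding p_def by (simp add: power2_eq_square exp_add[symmetric])
      have em2T: "exp (-2 * \<beta> * T) = 1 / p\<^sup>2"
      proof -
        have "exp (-2 * \<beta> * T) = inverse (exp (2 * \<beta> * T))" by (simp add: exp_minus[symmetric])
        then show ?thesis using e2T by (simp add: inverse_eq_divide)
      qed
      have pp: "p * p - 1 > 0" using p1 less_1_mult[OF p1 p1] by simp
      have q: "p\<^sup>2 - 1 > 0" using pp by (simp add: power2_eq_square)
      have pn: "p \<noteq> 0" using p1 by simp
      have C': "C = L * p / (p\<^sup>2 - 1)"
      proof -
        have "p - 1 / p = (p\<^sup>2 - 1) / p" using pn by (simp add: field_simps power2_eq_square)
        then show ?thesis unfolding C_def emT p_def[symmetric] using pn q by simp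
      qed
      have lhs: "(2 * \<beta>\<^sup>2 * C\<^sup>2) * ((exp (2 * \<beta> * T) - 1) / (2 * \<beta>)) = \<beta> * L\<^sup>2 * p\<^sup>2 / (p\<^sup>2 - 1)"
      proof -
        obtain D where D: "D = p\<^sup>2 - 1" by blast
        have D0: "D > 0" using q D by simp
        have "(2 * \<beta>\<^sup>2 * (L * p / D)\<^sup>2) * (D / (2 * \<beta>)) = \<beta> * L\<^sup>2 * p\<^sup>2 / D"
          using D0 \<beta>0 by (simp add: field_simps power2_eq_square)
        then show ?thesis unfolding e2T C' D[symmetric] by simp
      qed
      have rhs: "(1/2) * cc (a 2) T * L\<^sup>2 = \<beta> * L\<^sup>2 * p\<^sup>2 / (p\<^sup>2 - 1)"
      proof -
        have "1 - 1 / p\<^sup>2 = (p\<^sup>2 - 1) / p\<^sup>2" using pn by (simp add: field_simps)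
        then show ?thesis unfolding cc_def \<beta>_def[symmetric] em2T using pn q by (simp add: field_simps)
      qed
      show ?thesis using lhs rhs by linarith
    qed
    finally show ?thesis .
  qed
  have "Ifun e a T y0 T \<le> ereal (LINT t:{0..T}|lborel. (1/2) * (norm (v0 t))\<^sup>2 - (norm (ctrl e a (y0 t)))\<^sup>2)"
    unfolding Ifun_def by (rule INF_lower2[OF vC]) simp
  then have "Ifun e a T y0 T \<le> ereal ((1/2) * cc (a 2) T * L\<^sup>2)" unfolding J .
  then show ?thesis using Ty0 by blast
qed



lemma eps_arg:
  fixes A B C :: real
  assumes "\<And>\<epsilon>. 0 < \<epsilon> \<Longrightarrow> A \<le> B + C * \<epsilon>"
  shows "A \<le> B"
proof (rule field_le_epsilon)
  fix d :: real assume d: "0 < d"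
  define \<epsilon> where "\<epsilon> = d / (\<bar>C\<bar> + 1)"
  have \<epsilon>0: "0 < \<epsilon>" unfolding \<epsilon>_def using d by simp
  have "C * \<epsilon> \<le> \<bar>C\<bar> * \<epsilon>" using \<epsilon>0 by (intro mult_right_mono) auto
  also have "\<dots> \<le> (\<bar>C\<bar> + 1) * \<epsilon>" using \<epsilon>0 by (intro mult_right_mono) auto
  also have "\<dots> = d" unfolding \<epsilon>_def by simp
  finally show "A \<le> B + d" using assms[OF \<epsilon>0] by linarith
qed

lemma rho_props:
  assumes "0 < \<beta>" "0 < \<sigma>" "0 \<le> t" "t \<le> \<sigma>"
  shows "0 \<le> rho \<beta> \<sigma> t" "rho \<beta> \<sigma> t \<le> 1" "t < \<sigma> \<Longrightarrow> rho \<beta> \<sigma> t < 1"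
proof -
  have den: "0 < exp (\<beta> * \<sigma>) - exp (- \<beta> * \<sigma>)" using assms by simp
  have num: "0 \<le> exp (\<beta> * t) - exp (- \<beta> * t)" using assms by simp
  have le: "exp (\<beta> * t) - exp (- \<beta> * t) \<le> exp (\<beta> * \<sigma>) - exp (- \<beta> * \<sigma>)"
  proof -
    have "exp (\<beta> * t) \<le> exp (\<beta> * \<sigma>)" using assms by simp
    moreover have "exp (- \<beta> * \<sigma>) \<le> exp (- \<beta> * t)" using assms by simp
    ultimately show ?thesis by linarith
  qed
  show "0 \<le> rho \<beta> \<sigma> t" unfolding rho_def using den num by simp
  show "rho \<beta> \<sigma> t \<le> 1" unfolding rho_def using den le by simp
  assume lt: "t < \<sigma>"
  have "exp (\<beta> * t) - exp (- \<beta> * t) < exp (\<beta> * \<sigma>) - exp (- \<beta> * \<sigma>)"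
  proof -
    have "exp (\<beta> * t) < exp (\<beta> * \<sigma>)" using assms lt by simp
    moreover have "exp (- \<beta> * \<sigma>) < exp (- \<beta> * t)" using assms lt by simp
    ultimately show ?thesis by linarith
  qed
  then show "rho \<beta> \<sigma> t < 1" unfolding rho_def using den by simp
qed

lemma key_sum:
  fixes R d z :: "nat \<Rightarrow> real"
  assumes K: "finite K" "2 \<in> K" and R: "\<And>k. k \<in> K \<Longrightarrow> 0 \<le> R k"
    and d2: "d 2 = c2" and dk: "\<And>k. k \<in> K - {2} \<Longrightarrow> c2 + gap \<le> d k"
  shows "(\<Sum>k\<in>K. R k) + (1/2) * c2 * (\<Sum>k\<in>K. (z k)\<^sup>2) + (1/2) * gap * (\<Sum>k\<in>K-{2}. (z k)\<^sup>2)
          \<le> (\<Sum>k\<in>K. R k + (1/2) * d k * (z k)\<^sup>2)"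
proof -
  have "(\<Sum>k\<in>K. c2 * (z k)\<^sup>2) + (\<Sum>k\<in>K-{2}. gap * (z k)\<^sup>2) = (\<Sum>k\<in>K. c2 * (z k)\<^sup>2 + (if k = 2 then 0 else gap * (z k)\<^sup>2))"
  proof -
    have "(\<Sum>k\<in>K. (if k = 2 then 0 else gap * (z k)\<^sup>2)) = (\<Sum>k\<in>K-{2}. gap * (z k)\<^sup>2)"
      using K by (simp add: sum.If_cases Diff_eq)
    then show ?thesis by (simp add: sum.distrib)
  qed
  also have "\<dots> \<le> (\<Sum>k\<in>K. d k * (z k)\<^sup>2)"
  proof (rule sum_mono)
    fix k assume k: "k \<in> K"
    show "c2 * (z k)\<^sup>2 + (if k = 2 then 0 else gap * (z k)\<^sup>2) \<le> d k * (z k)\<^sup>2"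
    proof (cases "k = 2")
      case False
      then have "c2 + gap \<le> d k" using dk k by simp
      then have "(c2 + gap) * (z k)\<^sup>2 \<le> d k * (z k)\<^sup>2" by (intro mult_right_mono) auto
      then show ?thesis using False by (simp add: algebra_simps)
    qed (use d2 in simp)
  qed
  finally have A: "(\<Sum>k\<in>K. c2 * (z k)\<^sup>2) + (\<Sum>k\<in>K-{2}. gap * (z k)\<^sup>2) \<le> (\<Sum>k\<in>K. d k * (z k)\<^sup>2)" .
  define X where "X = (\<Sum>k\<in>K. c2 * (z k)\<^sup>2)"
  define Y where "Y = (\<Sum>k\<in>K-{2}. gap * (z k)\<^sup>2)"
  define D where "D = (\<Sum>k\<in>K. d k * (z k)\<^sup>2)"
  have e1: "(\<Sum>k\<in>K. R k + (1/2) * d k * (z k)\<^sup>2) = (\<Sum>k\<in>K. R k) + (1/2) * D"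
    unfolding D_def by (simp add: sum.distrib sum_distrib_left mult.assoc)
  have e2: "(1/2) * c2 * (\<Sum>k\<in>K. (z k)\<^sup>2) + (1/2) * gap * (\<Sum>k\<in>K-{2}. (z k)\<^sup>2) = (1/2) * (X + Y)"
    unfolding X_def Y_def by (simp add: sum_distrib_left algebra_simps)
  have A': "X + Y \<le> D" using A unfolding X_def Y_def D_def .
  show ?thesis unfolding e1 add.assoc e2 using A' by simp
qed


lemma sum_split12:
  fixes f :: "nat \<Rightarrow> real"
  assumes "finite K" "1 \<in> K" "2 \<in> K"
  shows "(\<Sum>k\<in>K. f k) = f 1 + f 2 + (\<Sum>k\<in>K-{1,2}. f k)"
proof -
  have "(\<Sum>k\<in>K. f k) = f 1 + (\<Sum>k\<in>K-{1}. f k)" using assms by (simp add: sum.remove)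
  also have "(\<Sum>k\<in>K-{1}. f k) = f 2 + (\<Sum>k\<in>K-{1}-{2}. f k)" using assms by (intro sum.remove) auto
  also have "K-{1}-{2} = K-{1,2}" by auto
  finally show ?thesis by simp
qed

theorem lemma3p13:
  fixes e :: "nat \<Rightarrow> 'h::{real_inner, complete_space, second_countable_topology}"
    and a :: "nat \<Rightarrow> real" and T L \<tau> :: real and ystar :: "real \<Rightarrow> 'h"
  assumes orthonormal: "\<forall>j\<ge>1. \<forall>k\<ge>1. inner (e j) (e k) = (if j = k then 1 else 0)"
    and complete: "closure (span (e ` {1..})) = UNIV"
    and nonneg: "\<forall>k\<ge>1. 0 \<le> a k"
    and strict_incr: "\<forall>k\<ge>1. a k < a (Suc k)"
    and a2_le: "a 2 \<le> 2 * a 1"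
    and L_pos: "L > 0"
    and T_gt: "ereal T > Tstar (a 1) (a 2)"
    and minimizer: "(ystar, \<tau>) \<in> Tset T L"
        "\<forall>(y, \<sigma>) \<in> Tset T L. Ifun e a T ystar \<tau> \<le> Ifun e a T y \<sigma>"
  shows "(\<forall>t\<in>{0..<T}. norm (ystar t) < L) \<and> norm (ystar T) = L \<and> \<tau> = T \<and>
         (\<forall>k\<ge>1. k \<noteq> 2 \<longrightarrow> inner (ystar T) (e k) = 0)"
proof -
  have ons: "ONS e" using orthonormal by (simp add: ONS_def)
  have a12: "a 1 < a 2" using strict_incr by (metis le_refl Suc_1)
  have a23: "a 2 < a 3"
    using strict_incr[rule_format, of 2] by (simp add: eval_nat_numeral)
  have a1nn: "0 \<le> a 1" using nonneg by simp
  have lt2: "a 2 < 2 * a 1"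
  proof (rule ccontr)
    assume "\<not> a 2 < 2 * a 1"
    then have "Tstar (a 1) (a 2) = \<infinity>" by (simp add: Tstar_def)
    then show False using T_gt by simp
  qed
  have a2: "0 < a 2" using a12 a1nn by linarith
  have a1: "0 < a 1" using a2 lt2 by linarith
  have apos: "\<forall>k\<ge>2. 0 < a k"
  proof (intro allI impI)
    fix k :: nat assume "2 \<le> k"
    then have "a 2 \<le> a k" by (intro mono_a[OF strict_incr]) auto
    then show "0 < a k" using a2 by linarith
  qed
  have ysc: "continuous_on {0..T} ystar" and ys0: "ystar 0 = 0" and \<tau>0: "0 < \<tau>" and \<tau>T: "\<tau> \<le> T"
    and ys\<tau>: "norm (ystar \<tau>) = L" and ysle: "\<forall>t\<in>{0..<\<tau>}. norm (ystar t) \<le> L"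
    using minimizer(1) by (auto simp: Tset_def)
  have T0: "0 < T" using \<tau>0 \<tau>T by linarith
  define c2 where "c2 = cc (a 2) T"
  have c2pos: "0 < c2" unfolding c2_def by (rule cc_pos[OF a2 T0])
  have c2lt: "c2 < 4 * a 1"
  proof -
    define x where "x = a 2 / (2 * a 1)"
    have x0: "0 < x" and x1: "x < 1" using a1 a2 lt2 by (auto simp: x_def field_simps)
    have "ereal (- (1 / (2 * a 2)) * ln (1 - x)) < ereal T"
      using T_gt lt2 by (simp add: Tstar_def x_def)
    then have "- (1 / (2 * a 2)) * ln (1 - x) < T" by simp
    then have "- ln (1 - x) < 2 * a 2 * T" using a2 by (simp add: field_simps)
    then have "- 2 * a 2 * T < ln (1 - x)" by simp
    then have "exp (- 2 * a 2 * T) < exp (ln (1 - x))" by simp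
    then have ex: "exp (- 2 * a 2 * T) < 1 - x" using x1 by simp
    then have "a 2 < 2 * a 1 * (1 - exp (-2 * a 2 * T))" unfolding x_def using a1 by (simp add: field_simps)
    moreover have "0 < 1 - exp (-2 * a 2 * T)" using a2 T0 by simp
    ultimately show ?thesis unfolding c2_def cc_def by (simp add: field_simps)
  qed
  define V where "V = (1/2) * c2 * L\<^sup>2"
  obtain y0 where y0: "(y0, T) \<in> Tset T L" "Ifun e a T y0 T \<le> ereal V"
    using competitor[of e a T L, OF ons a2 T0 L_pos] unfolding V_def c2_def by blast
  have IV: "Ifun e a T ystar \<tau> \<le> ereal V"
    using minimizer(2) y0 by (auto intro: order_trans)
  define J where "J = (\<lambda>(v::real \<Rightarrow> 'h) \<sigma>. LINT t:{0..\<sigma>}|lborel. (1/2) * (norm (v t))\<^sup>2 - (norm (ctrl e a (ystar t)))\<^sup>2)"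
  have \<tau>eq: "\<tau> = T"
  proof (rule ccontr)
    assume "\<tau> \<noteq> T"
    then have \<tau>lt: "\<tau> < T" using \<tau>T by simp
    define m where "m = min (4 * a 1) (cc (a 2) \<tau>)"
    have mgt: "c2 < m" unfolding m_def c2_def using c2lt cc_decr[OF a2 \<tau>0 \<tau>lt] by (simp add: c2_def)
    have m0: "0 < m" using mgt c2pos by simp
    have ddm: "m \<le> dd a \<tau> k" if "1 \<le> k" for k
    proof (cases "k = 1")
      case True then show ?thesis by (simp add: m_def dd_def)
    next
      case False
      then have k2: "2 \<le> k" using that by simp
      have "a 2 \<le> a k" by (rule mono_a[OF strict_incr _ k2]) simp
      then have "cc (a 2) \<tau> \<le> cc (a k) \<tau>"
        using cc_incr[OF a2 _ \<tau>0, of "a k"] by (cases "a 2 = a k") auto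
      then show ?thesis using False by (simp add: m_def dd_def)
    qed
    have "ereal ((1/2) * m * L\<^sup>2) \<le> Ifun e a T ystar \<tau>"
      unfolding Ifun_def
    proof (rule INF_greatest)
      fix v assume v: "v \<in> Cset e a T ystar"
      have "(1/2) * m * L\<^sup>2 \<le> J v \<tau>"
      proof (rule eps_arg)
        fix \<epsilon> :: real assume \<epsilon>: "0 < \<epsilon>"
        obtain K0 where K0: "finite K0" "K0 \<subseteq> {1..}" "(norm (ystar \<tau>))\<^sup>2 - \<epsilon> \<le> (\<Sum>k\<in>K0. (inner (ystar \<tau>) (e k))\<^sup>2)"
          using parseval_approx[OF ons complete \<epsilon>] by blast
        define K where "K = K0 \<union> {1}"
        have K: "finite K" "K \<subseteq> {1..}" "1 \<in> K" using K0 by (auto simp: K_def)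
        obtain R where R: "\<forall>k\<in>K. 0 \<le> R k"
          "(\<Sum>k\<in>K. R k + (1/2) * dd a \<tau> k * (inner (ystar \<tau>) (e k))\<^sup>2) \<le> J v \<tau>"
          using LB[OF ons a1 apos ysc ys0 \<tau>0 \<tau>T v K] unfolding J_def by blast
        have "(1/2) * m * (\<Sum>k\<in>K. (inner (ystar \<tau>) (e k))\<^sup>2) = (\<Sum>k\<in>K. (1/2) * m * (inner (ystar \<tau>) (e k))\<^sup>2)"
          by (simp add: sum_distrib_left)
        also have "\<dots> \<le> (\<Sum>k\<in>K. R k + (1/2) * dd a \<tau> k * (inner (ystar \<tau>) (e k))\<^sup>2)"
        proof (rule sum_mono)
          fix k assume k: "k \<in> K"
          have "m \<le> dd a \<tau> k" using ddm k K(2) by auto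
          then have "(1/2) * m * (inner (ystar \<tau>) (e k))\<^sup>2 \<le> (1/2) * dd a \<tau> k * (inner (ystar \<tau>) (e k))\<^sup>2"
            by (intro mult_right_mono) auto
          then show "(1/2) * m * (inner (ystar \<tau>) (e k))\<^sup>2 \<le> R k + (1/2) * dd a \<tau> k * (inner (ystar \<tau>) (e k))\<^sup>2"
            using R(1) k by fastforce
        qed
        also have "\<dots> \<le> J v \<tau>" by (rule R(2))
        finally have A: "(1/2) * m * (\<Sum>k\<in>K. (inner (ystar \<tau>) (e k))\<^sup>2) \<le> J v \<tau>" .
        have "(\<Sum>k\<in>K0. (inner (ystar \<tau>) (e k))\<^sup>2) \<le> (\<Sum>k\<in>K. (inner (ystar \<tau>) (e k))\<^sup>2)"
          by (rule sum_mono2) (use K in \<open>auto simp: K_def\<close>)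
        then have "L\<^sup>2 - \<epsilon> \<le> (\<Sum>k\<in>K. (inner (ystar \<tau>) (e k))\<^sup>2)" using K0(3) ys\<tau> by simp
        then have "(1/2) * m * (L\<^sup>2 - \<epsilon>) \<le> (1/2) * m * (\<Sum>k\<in>K. (inner (ystar \<tau>) (e k))\<^sup>2)"
          using m0 by (intro mult_left_mono) auto
        then show "(1/2) * m * L\<^sup>2 \<le> J v \<tau> + (1/2) * m * \<epsilon>" using A by (simp add: algebra_simps)
      qed
      then show "ereal ((1/2) * m * L\<^sup>2) \<le> ereal (LINT t:{0..\<tau>}|lborel. (1/2) * (norm (v t))\<^sup>2 - (norm (ctrl e a (ystar t)))\<^sup>2)"
        unfolding J_def by simp
    qed
    then have "(1/2) * m * L\<^sup>2 \<le> V" using IV by (meson ereal_less_eq(3) order_trans)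
    moreover have "V < (1/2) * m * L\<^sup>2" unfolding V_def using mgt L_pos by simp
    ultimately show False by simp
  qed
  have ysT: "norm (ystar T) = L" using ys\<tau> \<tau>eq by simp
  have ysleT: "\<forall>t\<in>{0..<T}. norm (ystar t) \<le> L" using ysle \<tau>eq by simp
  have IVT: "Ifun e a T ystar T \<le> ereal V" using IV \<tau>eq by simp
  have vT: "T \<le> T" by simp
  have approx: "\<exists>v\<in>Cset e a T ystar. J v T < V + \<epsilon>" if "0 < \<epsilon>" for \<epsilon>
  proof -
    have "ereal V < ereal (V + \<epsilon>)" using that by simp
    then have "Ifun e a T ystar T < ereal (V + \<epsilon>)" using IVT by (rule le_less_trans[rotated])
    then show ?thesis unfolding Ifun_def J_def by (simp add: INF_less_iff)
  qed
  define gap where "gap = min (4 * a 1 - c2) (cc (a 3) T - c2)"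
  have gap0: "0 < gap" using c2lt cc_incr[OF a2 a23 T0] unfolding gap_def c2_def by simp
  have dd2: "dd a T 2 = c2" by (simp add: dd_def c2_def)
  have ddk: "c2 + gap \<le> dd a T k" if "1 \<le> k" "k \<noteq> 2" for k
  proof (cases "k = 1")
    case True then show ?thesis by (simp add: dd_def gap_def)
  next
    case False
    then have k3: "3 \<le> k" using that by simp
    have "a 3 \<le> a k" by (rule mono_a[OF strict_incr _ k3]) simp
    then have "cc (a 3) T \<le> cc (a k) T"
      using cc_incr[of "a 3" "a k" T] a2 a23 T0 by (cases "a 3 = a k") auto
    then show ?thesis using False by (simp add: dd_def gap_def)
  qed
  have ME: "(\<Sum>k\<in>K. R k) + (1/2) * gap * (\<Sum>k\<in>K-{2}. (inner (ystar T) (e k))\<^sup>2) \<le> \<epsilon> * (1 + c2 / 2)"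
    if "0 < \<epsilon>" "J v T < V + \<epsilon>" "finite K" "2 \<in> K" "K \<subseteq> {1..}" "\<forall>k\<in>K. 0 \<le> R k"
      "L\<^sup>2 - \<epsilon> \<le> (\<Sum>k\<in>K. (inner (ystar T) (e k))\<^sup>2)"
      "(\<Sum>k\<in>K. R k + (1/2) * dd a T k * (inner (ystar T) (e k))\<^sup>2) \<le> J v T"
    for \<epsilon> v K R
  proof -
    have ks: "(\<Sum>k\<in>K. R k) + (1/2) * c2 * (\<Sum>k\<in>K. (inner (ystar T) (e k))\<^sup>2) + (1/2) * gap * (\<Sum>k\<in>K-{2}. (inner (ystar T) (e k))\<^sup>2)
          \<le> (\<Sum>k\<in>K. R k + (1/2) * dd a T k * (inner (ystar T) (e k))\<^sup>2)"
      by (rule key_sum[OF that(3,4)]) (use that(5,6) dd2 ddk in auto)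
    have "(1/2) * c2 * (L\<^sup>2 - \<epsilon>) \<le> (1/2) * c2 * (\<Sum>k\<in>K. (inner (ystar T) (e k))\<^sup>2)"
      using that(7) c2pos by (intro mult_left_mono) auto
    moreover have "(1/2) * c2 * (L\<^sup>2 - \<epsilon>) = V - (1/2) * c2 * \<epsilon>" unfolding V_def by (simp add: algebra_simps)
    moreover have "\<epsilon> * (1 + c2 / 2) = \<epsilon> + (1/2) * c2 * \<epsilon>" by (simp add: algebra_simps)
    ultimately show ?thesis using ks that(2,8) by linarith
  qed
  have exitdir: "inner (ystar T) (e k0) = 0" if k0: "1 \<le> k0" "k0 \<noteq> 2" for k0
  proof -
    have "(inner (ystar T) (e k0))\<^sup>2 \<le> 0"
    proof (rule eps_arg[where C = "2 * (1 + c2 / 2) / gap"])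
      fix \<epsilon> :: real assume \<epsilon>: "0 < \<epsilon>"
      obtain v where v: "v \<in> Cset e a T ystar" "J v T < V + \<epsilon>" using approx[OF \<epsilon>] by blast
      obtain K0 where K0: "finite K0" "K0 \<subseteq> {1..}" "(norm (ystar T))\<^sup>2 - \<epsilon> \<le> (\<Sum>k\<in>K0. (inner (ystar T) (e k))\<^sup>2)"
        using parseval_approx[OF ons complete \<epsilon>] by blast
      define K where "K = K0 \<union> {1, 2, k0}"
      have K: "finite K" "K \<subseteq> {1..}" "1 \<in> K" "2 \<in> K" "k0 \<in> K" using K0 k0 by (auto simp: K_def)
      obtain R where R: "\<forall>k\<in>K. 0 \<le> R k"
        "(\<Sum>k\<in>K. R k + (1/2) * dd a T k * (inner (ystar T) (e k))\<^sup>2) \<le> J v T"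
        using LB[OF ons a1 apos ysc ys0 T0 vT v(1) K(1,2,3)] unfolding J_def by blast
      have "(\<Sum>k\<in>K0. (inner (ystar T) (e k))\<^sup>2) \<le> (\<Sum>k\<in>K. (inner (ystar T) (e k))\<^sup>2)"
        by (rule sum_mono2) (use K in \<open>auto simp: K_def\<close>)
      then have Lz: "L\<^sup>2 - \<epsilon> \<le> (\<Sum>k\<in>K. (inner (ystar T) (e k))\<^sup>2)" using K0(3) ysT by simp
      have M: "(\<Sum>k\<in>K. R k) + (1/2) * gap * (\<Sum>k\<in>K-{2}. (inner (ystar T) (e k))\<^sup>2) \<le> \<epsilon> * (1 + c2 / 2)"
        by (rule ME[OF \<epsilon> v(2) K(1) K(4) K(2) R(1) Lz R(2)])
      have S0: "0 \<le> (\<Sum>k\<in>K. R k)" using R(1) by (intro sum_nonneg) auto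
      have z: "(inner (ystar T) (e k0))\<^sup>2 \<le> (\<Sum>k\<in>K-{2}. (inner (ystar T) (e k))\<^sup>2)"
        by (rule member_le_sum) (use K k0 in auto)
      have "(1/2) * gap * (inner (ystar T) (e k0))\<^sup>2 \<le> \<epsilon> * (1 + c2 / 2)"
      proof -
        have "(1/2) * gap * (inner (ystar T) (e k0))\<^sup>2 \<le> (1/2) * gap * (\<Sum>k\<in>K-{2}. (inner (ystar T) (e k))\<^sup>2)"
          using z gap0 by (intro mult_left_mono) auto
        then show ?thesis using M S0 by linarith
      qed
      then show "(inner (ystar T) (e k0))\<^sup>2 \<le> 0 + 2 * (1 + c2 / 2) / gap * \<epsilon>"
        using gap0 by (simp add: field_simps)
    qed
    then show ?thesis by simp
  qed
  have touch: "norm (ystar t0) < L" if t0: "t0 \<in> {0..<T}" for t0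
  proof (rule ccontr)
    assume "\<not> norm (ystar t0) < L"
    then have yt0: "norm (ystar t0) = L" using ysleT t0 by force
    have t00: "0 \<le> t0" and t0T: "t0 < T" using t0 by auto
    have t0i: "t0 \<in> {0..T}" using t00 t0T by simp
    define \<rho>2 where "\<rho>2 = rho (a 2) T t0"
    have \<rho>2: "0 \<le> \<rho>2" "\<rho>2 < 1" unfolding \<rho>2_def using rho_props[OF a2 T0 t00] t0T by auto
    define Cst where "Cst = exp (2 * a 1 * T) / a 1 + 4 / gap + 2 / a 2"
    define \<Phi> where "\<Phi> = (\<lambda>\<epsilon>. \<epsilon> + (\<rho>2 * L + sqrt (\<epsilon> * (1 + c2 / 2) / a 2))\<^sup>2 + \<epsilon> * (1 + c2 / 2) * Cst)"
    have bound: "L\<^sup>2 \<le> \<Phi> \<epsilon>" if \<epsilon>: "0 < \<epsilon>" for \<epsilon>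
    proof -
      define \<delta> where "\<delta> = \<epsilon> * (1 + c2 / 2)"
      have \<delta>0: "0 \<le> \<delta>" unfolding \<delta>_def using \<epsilon> c2pos by simp
      obtain v where v: "v \<in> Cset e a T ystar" "J v T < V + \<epsilon>" using approx[OF \<epsilon>] by blast
      obtain K0 where K0: "finite K0" "K0 \<subseteq> {1..}" "(norm (ystar T))\<^sup>2 - \<epsilon> \<le> (\<Sum>k\<in>K0. (inner (ystar T) (e k))\<^sup>2)"
        using parseval_approx[OF ons complete \<epsilon>] by blast
      obtain K1 where K1: "finite K1" "K1 \<subseteq> {1..}" "(norm (ystar t0))\<^sup>2 - \<epsilon> \<le> (\<Sum>k\<in>K1. (inner (ystar t0) (e k))\<^sup>2)"
        using parseval_approx[OF ons complete \<epsilon>] by blast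
      define K where "K = K0 \<union> K1 \<union> {1, 2}"
      have K: "finite K" "K \<subseteq> {1..}" "1 \<in> K" "2 \<in> K" using K0 K1 by (auto simp: K_def)
      obtain R where R: "\<forall>k\<in>K. 0 \<le> R k"
        "(\<Sum>k\<in>K. R k + (1/2) * dd a T k * (inner (ystar T) (e k))\<^sup>2) \<le> J v T"
        "\<forall>t\<in>{0..T}. (inner (ystar t) (e 1))\<^sup>2 \<le> exp (2 * a 1 * T) / a 1 * R 1"
        "\<forall>k\<in>K-{1}. \<forall>t\<in>{0..T}. (inner (ystar t) (e k) - rho (a k) T t * inner (ystar T) (e k))\<^sup>2 \<le> R k / a k"
        using LB[OF ons a1 apos ysc ys0 T0 vT v(1) K(1,2,3)] unfolding J_def by blast
      have "(\<Sum>k\<in>K0. (inner (ystar T) (e k))\<^sup>2) \<le> (\<Sum>k\<in>K. (inner (ystar T) (e k))\<^sup>2)"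
        by (rule sum_mono2) (use K in \<open>auto simp: K_def\<close>)
      then have Lz: "L\<^sup>2 - \<epsilon> \<le> (\<Sum>k\<in>K. (inner (ystar T) (e k))\<^sup>2)" using K0(3) ysT by simp
      have "(\<Sum>k\<in>K1. (inner (ystar t0) (e k))\<^sup>2) \<le> (\<Sum>k\<in>K. (inner (ystar t0) (e k))\<^sup>2)"
        by (rule sum_mono2) (use K in \<open>auto simp: K_def\<close>)
      then have Ly: "L\<^sup>2 - \<epsilon> \<le> (\<Sum>k\<in>K. (inner (ystar t0) (e k))\<^sup>2)" using K1(3) yt0 by simp
      define SR where "SR = (\<Sum>k\<in>K. R k)"
      define Z' where "Z' = (\<Sum>k\<in>K-{2}. (inner (ystar T) (e k))\<^sup>2)"
      have M: "SR + (1/2) * gap * Z' \<le> \<delta>"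
        unfolding SR_def Z'_def \<delta>_def by (rule ME[OF \<epsilon> v(2) K(1) K(4) K(2) R(1) Lz R(2)])
      have SR0: "0 \<le> SR" unfolding SR_def using R(1) by (intro sum_nonneg) auto
      have Z'0: "0 \<le> Z'" unfolding Z'_def by (intro sum_nonneg) auto
      have gZ: "0 \<le> (1/2) * gap * Z'" using gap0 Z'0 by simp
      have SRd: "SR \<le> \<delta>" using M gZ by linarith
      have Z'd: "Z' \<le> 2 * \<delta> / gap"
      proof -
        have "(1/2) * gap * Z' \<le> \<delta>" using M SR0 by linarith
        then show ?thesis using gap0 by (simp add: field_simps)
      qed
      have Rk: "R k \<le> SR" if "k \<in> K" for k
        unfolding SR_def by (rule member_le_sum) (use R(1) that K(1) in auto)
      define y where "y = (\<lambda>k. inner (ystar t0) (e k))"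
      define z where "z = (\<lambda>k. inner (ystar T) (e k))"
      have y1: "(y 1)\<^sup>2 \<le> exp (2 * a 1 * T) / a 1 * \<delta>"
      proof -
        have "(y 1)\<^sup>2 \<le> exp (2 * a 1 * T) / a 1 * R 1" using R(3) t0i unfolding y_def by blast
        also have "\<dots> \<le> exp (2 * a 1 * T) / a 1 * \<delta>"
          using Rk[OF K(3)] SRd a1 by (intro mult_left_mono) auto
        finally show ?thesis .
      qed
      have y2: "(y 2)\<^sup>2 \<le> (\<rho>2 * L + sqrt (\<delta> / a 2))\<^sup>2"
      proof -
        have d2: "(y 2 - \<rho>2 * z 2)\<^sup>2 \<le> \<delta> / a 2"
        proof -
          have "(y 2 - \<rho>2 * z 2)\<^sup>2 \<le> R 2 / a 2" using R(4) K(4) t0i unfolding y_def z_def \<rho>2_def by auto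
          also have "\<dots> \<le> \<delta> / a 2" using Rk[OF K(4)] SRd a2 by (intro divide_right_mono) auto
          finally show ?thesis .
        qed
        have "\<bar>y 2 - \<rho>2 * z 2\<bar> \<le> sqrt (\<delta> / a 2)"
          using real_sqrt_le_mono[OF d2] by simp
        moreover have "\<bar>z 2\<bar> \<le> L"
        proof -
          have "\<bar>z 2\<bar> \<le> norm (ystar T) * norm (e 2)" unfolding z_def by (rule Cauchy_Schwarz_ineq2)
          then show ?thesis using ysT ONS_norm[OF ons, of 2] by simp
        qed
        ultimately have "\<bar>y 2\<bar> \<le> \<rho>2 * L + sqrt (\<delta> / a 2)"
        proof -
          assume A: "\<bar>y 2 - \<rho>2 * z 2\<bar> \<le> sqrt (\<delta> / a 2)" and B: "\<bar>z 2\<bar> \<le> L"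
          have "\<bar>\<rho>2 * z 2\<bar> \<le> \<rho>2 * L" using B \<rho>2(1) by (simp add: abs_mult mult_left_mono)
          then show ?thesis using A by linarith
        qed
        then have "\<bar>y 2\<bar>\<^sup>2 \<le> (\<rho>2 * L + sqrt (\<delta> / a 2))\<^sup>2" by (intro power_mono) auto
        then show ?thesis by simp
      qed
      have rest: "(\<Sum>k\<in>K-{1,2}. (y k)\<^sup>2) \<le> 2 * Z' + 2 / a 2 * SR"
      proof -
        have "(\<Sum>k\<in>K-{1,2}. (y k)\<^sup>2) \<le> (\<Sum>k\<in>K-{1,2}. 2 * (z k)\<^sup>2 + 2 / a 2 * R k)"
        proof (rule sum_mono)
          fix k assume k: "k \<in> K - {1, 2}"
          then have k2: "2 \<le> k" using K(2) by force
          have ak: "a 2 \<le> a k" by (rule mono_a[OF strict_incr _ k2]) simp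
          define r where "r = rho (a k) T t0"
          have r: "0 \<le> r" "r \<le> 1" unfolding r_def using rho_props[OF apos[rule_format, OF k2] T0 t00] t0T by auto
          have d: "(y k - r * z k)\<^sup>2 \<le> R k / a k" using R(4) k t0i unfolding y_def z_def r_def by auto
          have "R k / a k \<le> R k / a 2" using R(1) k ak a2 by (intro divide_left_mono) auto
          with d have d': "(y k - r * z k)\<^sup>2 \<le> R k / a 2" by linarith
          have rz: "(r * z k)\<^sup>2 \<le> (z k)\<^sup>2"
          proof -
            have "\<bar>r * z k\<bar> \<le> \<bar>z k\<bar>" using r by (simp add: abs_mult mult_left_le_one_le)
            then show ?thesis by (metis abs_le_square_iff)
          qed
          have "(y k)\<^sup>2 \<le> 2 * (r * z k)\<^sup>2 + 2 * (y k - r * z k)\<^sup>2"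
          proof -
            have "0 \<le> (2 * r * z k - y k)\<^sup>2" by simp
            then show ?thesis by (simp add: power2_eq_square algebra_simps)
          qed
          moreover have "2 / a 2 * R k = 2 * (R k / a 2)" by simp
          ultimately show "(y k)\<^sup>2 \<le> 2 * (z k)\<^sup>2 + 2 / a 2 * R k" using rz d' by linarith
        qed
        also have "\<dots> = 2 * (\<Sum>k\<in>K-{1,2}. (z k)\<^sup>2) + 2 / a 2 * (\<Sum>k\<in>K-{1,2}. R k)"
          by (simp add: sum.distrib sum_distrib_left)
        also have "\<dots> \<le> 2 * Z' + 2 / a 2 * SR"
        proof -
          have "(\<Sum>k\<in>K-{1,2}. (z k)\<^sup>2) \<le> Z'" unfolding Z'_def z_def by (rule sum_mono2) (use K in auto)
          moreover have "(\<Sum>k\<in>K-{1,2}. R k) \<le> SR" unfolding SR_def by (rule sum_mono2) (use K R(1) in auto)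
          moreover have "0 \<le> 2 / a 2" using a2 by simp
          ultimately show ?thesis by (smt (verit) mult_left_mono)
        qed
        finally show ?thesis .
      qed
      have split: "(\<Sum>k\<in>K. (inner (ystar t0) (e k))\<^sup>2) = (y 1)\<^sup>2 + (y 2)\<^sup>2 + (\<Sum>k\<in>K-{1,2}. (y k)\<^sup>2)"
        unfolding y_def by (rule sum_split12[OF K(1,3,4)])
      have r2: "2 * Z' + 2 / a 2 * SR \<le> 4 / gap * \<delta> + 2 / a 2 * \<delta>"
      proof -
        have "2 * Z' \<le> 2 * (2 * \<delta> / gap)" using Z'd by linarith
        also have "\<dots> = 4 / gap * \<delta>" by simp
        finally have "2 * Z' \<le> 4 / gap * \<delta>" .
        moreover have "2 / a 2 * SR \<le> 2 / a 2 * \<delta>" using SRd a2 by (intro mult_left_mono) auto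
        ultimately show ?thesis by linarith
      qed
      have "\<Phi> \<epsilon> = \<epsilon> + (\<rho>2 * L + sqrt (\<delta> / a 2))\<^sup>2 + (exp (2 * a 1 * T) / a 1 * \<delta> + (4 / gap * \<delta> + 2 / a 2 * \<delta>))"
        unfolding \<Phi>_def \<delta>_def Cst_def using a2 by (simp add: algebra_simps)
      then show ?thesis using Ly split y1 y2 rest r2 by linarith
    qed
    have cont: "isCont \<Phi> 0" unfolding \<Phi>_def using a2 by (auto intro!: continuous_intros)
    have lim: "(\<Phi> \<longlongrightarrow> \<Phi> 0) (at_right 0)"
      using tendsto_mono[OF at_le[OF subset_UNIV] cont[unfolded isCont_def]] .
    have \<Phi>0: "\<Phi> 0 < L\<^sup>2"
    proof -
      have "\<rho>2 * L < L" using \<rho>2 L_pos by simp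
      then have "(\<rho>2 * L)\<^sup>2 < L\<^sup>2" using \<rho>2 L_pos by (intro power_strict_mono) auto
      then show ?thesis unfolding \<Phi>_def by simp
    qed
    have "eventually (\<lambda>\<epsilon>. \<Phi> \<epsilon> < L\<^sup>2) (at_right 0)" by (rule order_tendstoD(2)[OF lim \<Phi>0])
    moreover have "eventually (\<lambda>\<epsilon>. (0::real) < \<epsilon>) (at_right 0)" by (rule eventually_at_right_less)
    ultimately have "eventually (\<lambda>\<epsilon>. \<Phi> \<epsilon> < L\<^sup>2 \<and> 0 < \<epsilon>) (at_right (0::real))" by (rule eventually_conj)
    then obtain \<epsilon> where "\<Phi> \<epsilon> < L\<^sup>2" "0 < \<epsilon>"
      using eventually_happens[of _ "at_right (0::real)"] by auto
    then show False using bound by fastforce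
  qed
  show ?thesis using touch ysT \<tau>eq exitdir by blast
qed


end
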